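(* The language class $\mathbf{GRLOWJ}$ is a proper subset of the class $\mathbf{CS}$ of context-sensitive languages, i.e., $\mathbf{GRLOWJ}\subset\mathbf{CS}$.
   Context: $\mathbf{CS}$ is the class of context-sensitive languages (languages accepted by linear bounded automata). "Subword" means a contiguous factor. A GRLOWJFA is a tuple $\mathcal{A}=(\Sigma,Q,q_0,F,R)$ with $\Sigma$ a finite alphabet, $Q$ a finite state set, $q_0\in Q$, $F\subseteq Q$, and $R\subset Q\times\Sigma^+\times Q$ a finite set of rules such that for each $p\in Q$, $w\in\Sigma^+$ at most one $q$ has $(p,w,q)\in R$ (meaning: go from $p$ to $q$ deleting $w$). $\Sigma_p=\{w:(p,w,q)\in R\text{ for some }q\}$. Configurations lie in $\Sigma^*Q\Sigma^*$. Moves $\curvearrowright$: (1) for $t,u,v\in\Sigma^*$ and $(p,x,q)\in R$: $tpuxv\curvearrowright tuqv$ provided $u$ contains no word of $\Sigma_p$ as a subword and there are no $u_1,x_2\in\Sigma^*$, $u_2,x_1\in\Sigma^+$ with $u=u_1u_2$, $x=x_1x_2$, $u_2x_1=x$; (2) for $x\in\Sigma^+$, $y\in\Sigma^*$ with $y$ containing no word of $\Sigma_p$ as a subword: $xpy\curvearrowright pxy$. $L_{GRL}(\mathcal{A})=\{w\in\Sigma^*: q_0w\curvearrowright^* q_f \text{ for some } q_f\in F\}$. $\mathbf{GRLOWJ}$ is the class of languages so accepted. *)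

theory Defs
  imports Main "HOL-Library.Sublist"
begin

text \<open>"Subword" means a contiguous factor; this is sublist from HOL-Library.Sublist.\<close>

definition no_subword_in :: "'a list \<Rightarrow> 'a list set \<Rightarrow> bool" where
  "no_subword_in u W \<longleftrightarrow> (\<forall>w\<in>W. \<not> sublist w u)"

record ('a, 's) grlowjfa =
  alph :: "'a set"
  states :: "'s set"
  init :: 's
  finals :: "'s set"
  rules :: "('s \<times> 'a list \<times> 's) set"

definition wf_grlowjfa :: "('a, 's) grlowjfa \<Rightarrow> bool" where
  "wf_grlowjfa A \<longleftrightarrow>
     finite (alph A) \<and> finite (states A) \<and> init A \<in> states A \<and>
     finals A \<subseteq> states A \<and> finite (rules A) \<and>
     (\<forall>(p, w, q) \<in> rules A. p \<in> states A \<and> q \<in> states A \<and> w \<noteq> [] \<and> set w \<subseteq> alph A) \<and>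
     (\<forall>p w q q'. (p, w, q) \<in> rules A \<longrightarrow> (p, w, q') \<in> rules A \<longrightarrow> q = q')"

definition Sigma_p :: "('a, 's) grlowjfa \<Rightarrow> 's \<Rightarrow> 'a list set" where
  "Sigma_p A p = {w. \<exists>q. (p, w, q) \<in> rules A}"

text \<open>Configurations t p v are encoded as triples (t, p, v).\<close>

inductive grl_move :: "('a, 's) grlowjfa \<Rightarrow> ('a list \<times> 's \<times> 'a list) \<Rightarrow> ('a list \<times> 's \<times> 'a list) \<Rightarrow> bool"
  for A where
  jump_delete:
    "\<lbrakk> (p, x, q) \<in> rules A; no_subword_in u (Sigma_p A p);
       \<not> (\<exists>u1 u2 x1 x2. u = u1 @ u2 \<and> x = x1 @ x2 \<and> u2 \<noteq> [] \<and> x1 \<noteq> [] \<and> u2 @ x1 = x) \<rbrakk>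
     \<Longrightarrow> grl_move A (t, p, u @ x @ v) (t @ u, q, v)"
| jump_back:
    "\<lbrakk> x \<noteq> []; no_subword_in y (Sigma_p A p) \<rbrakk>
     \<Longrightarrow> grl_move A (x, p, y) ([], p, x @ y)"

definition L_GRL :: "('a, 's) grlowjfa \<Rightarrow> 'a list set" where
  "L_GRL A = {w \<in> lists (alph A). \<exists>qf \<in> finals A. (grl_move A)\<^sup>*\<^sup>* ([], init A, w) ([], qf, [])}"

definition GRLOWJ :: "'a list set set" where
  "GRLOWJ = {L. \<exists>A :: ('a, nat) grlowjfa. wf_grlowjfa A \<and> L = L_GRL A}"

text \<open>Nondeterministic one-tape Turing machine whose tape initially holds
  the input between a left and a right endmarker and which never leaves this
  region.  Tape symbols are of type 'a + nat: input letters are Inl a.\<close>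

record ('a, 's) lba =
  lba_states :: "'s set"
  lba_input :: "'a set"
  lba_tape :: "('a + nat) set"
  lba_lm :: "'a + nat"
  lba_rm :: "'a + nat"
  lba_delta :: "('s \<times> ('a + nat) \<times> 's \<times> ('a + nat) \<times> int) set"
  lba_init :: 's
  lba_finals :: "'s set"

definition wf_lba :: "('a, 's) lba \<Rightarrow> bool" where
  "wf_lba M \<longleftrightarrow>
     finite (lba_states M) \<and> finite (lba_input M) \<and> finite (lba_tape M) \<and>
     Inl ` lba_input M \<subseteq> lba_tape M \<and>
     lba_lm M \<in> lba_tape M - Inl ` lba_input M \<and> lba_rm M \<in> lba_tape M - Inl ` lba_input M \<and>
     lba_lm M \<noteq> lba_rm M \<and>
     lba_init M \<in> lba_states M \<and> lba_finals M \<subseteq> lba_states M \<and> finite (lba_delta M) \<and>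
     (\<forall>(p, a, q, b, d) \<in> lba_delta M.
        p \<in> lba_states M \<and> q \<in> lba_states M \<and> a \<in> lba_tape M \<and> b \<in> lba_tape M \<and>
        d \<in> {-1, 0, 1} \<and>
        (a = lba_lm M \<longrightarrow> b = lba_lm M \<and> d \<ge> 0) \<and>
        (a = lba_rm M \<longrightarrow> b = lba_rm M \<and> d \<le> 0) \<and>
        (a \<noteq> lba_lm M \<longrightarrow> b \<noteq> lba_lm M) \<and>
        (a \<noteq> lba_rm M \<longrightarrow> b \<noteq> lba_rm M))"

inductive lba_step :: "('a, 's) lba \<Rightarrow> ('s \<times> ('a + nat) list \<times> nat) \<Rightarrow> ('s \<times> ('a + nat) list \<times> nat) \<Rightarrow> bool"
  for M where
  "\<lbrakk> i < length tp; (p, tp ! i, q, b, d) \<in> lba_delta M;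
     0 \<le> int i + d; int i + d < int (length tp) \<rbrakk>
   \<Longrightarrow> lba_step M (p, tp, i) (q, tp[i := b], nat (int i + d))"

definition L_LBA :: "('a, 's) lba \<Rightarrow> 'a list set" where
  "L_LBA M = {w \<in> lists (lba_input M). \<exists>q tp i. q \<in> lba_finals M \<and>
      (lba_step M)\<^sup>*\<^sup>* (lba_init M, [lba_lm M] @ map Inl w @ [lba_rm M], 0) (q, tp, i)}"

definition CS :: "'a list set set" where
  "CS = {L. \<exists>M :: ('a, nat) lba. wf_lba M \<and> L = L_LBA M}"

end

theory Submission
  imports Defs "HOL-Library.Countable"
begin

definition Pow2L :: "nat list set" where
  "Pow2L = {replicate (2^k) 0 | k. True}"

lemma app_replicate:
  assumes "xs @ ys = replicate n a"
  shows "xs = replicate (length xs) a" "ys = replicate (length ys) a"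
proof -
  have "set (xs @ ys) \<subseteq> {a}" using assms by auto
  then have "\<forall>y\<in>set xs. y = a" "\<forall>y\<in>set ys. y = a" by auto
  then show "xs = replicate (length xs) a" "ys = replicate (length ys) a"
    by (simp_all add: replicate_length_same)
qed

lemma unary_move:
  assumes wf: "wf_grlowjfa A" and mv: "grl_move A ([], p, replicate m a) c'"
  shows "\<exists>q k. (p, replicate k a, q) \<in> rules A \<and> 1 \<le> k \<and> k \<le> m \<and> c' = ([], q, replicate (m - k) a)"
  using mv
proof cases
  case (jump_delete x q u v)
  have xne: "x \<noteq> []" using wf jump_delete(3) unfolding wf_grlowjfa_def by blast
  have eq: "u @ x @ v = replicate m a" using jump_delete(1) by simp
  have ur: "u = replicate (length u) a" using app_replicate(1)[OF eq] .
  have xvr: "x @ v = replicate (length (x @ v)) a" using app_replicate(2)[OF eq] .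
  have xr: "x = replicate (length x) a" using app_replicate(1)[OF xvr] .
  have vr: "v = replicate (length v) a" using app_replicate(2)[OF xvr] .
  have u0: "u = []"
  proof (rule ccontr)
    assume une: "u \<noteq> []"
    show False
    proof (cases "length x = 1")
      case True
      then have "x = [a]" using xr by (simp add: One_nat_def)
      then have "[a] \<in> Sigma_p A p" using jump_delete(3) unfolding Sigma_p_def by blast
      moreover have "sublist [a] u"
      proof -
        obtain L where "u = replicate L a" "L \<noteq> 0" using une ur by (metis replicate_0)
        then have "u = [] @ [a] @ replicate (L - 1) a" by (cases L) auto
        then show ?thesis by (metis sublist_appendI)
      qed
      ultimately show False using jump_delete(4) unfolding no_subword_in_def by blast
    next
      case False
      then have lx: "length x \<ge> 2" using xne by (cases x) (auto simp: Suc_le_eq)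
      let ?u1 = "butlast u" and ?u2 = "[a]" and ?x1 = "take (length x - 1) x" and ?x2 = "drop (length x - 1) x"
      have "u = ?u1 @ ?u2" using une ur
        by (metis append_butlast_last_id last_replicate length_0_conv)
      moreover have "x = ?x1 @ ?x2" by simp
      moreover have "?x1 \<noteq> []" using lx by (cases x) auto
      moreover have "?u2 @ ?x1 = x"
      proof -
        obtain L where L: "x = replicate L a" "L \<ge> 2" using xr lx by metis
        have "?x1 = replicate (L-1) a" using L(1) by simp
        then show ?thesis using L by (cases L) auto
      qed
      ultimately show False using jump_delete(5) by blast
    qed
  qed
  show ?thesis
  proof (intro exI conjI)
    show "(p, replicate (length x) a, q) \<in> rules A" using jump_delete(3) xr by simp
    show "1 \<le> length x" using xne by (cases x) auto
    have "length u + length x + length v = m" using arg_cong[OF eq, of length] by simp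
    then show "length x \<le> m" by simp
    have "length v = m - length x" using \<open>length u + length x + length v = m\<close> u0 by simp
    then show "c' = ([], q, replicate (m - length x) a)" using jump_delete(2) u0 vr by simp
  qed
next
  case jump_back
  then show ?thesis by simp
qed

definition Ustep :: "('a, nat) grlowjfa \<Rightarrow> 'a \<Rightarrow> nat \<times> nat \<Rightarrow> nat \<times> nat \<Rightarrow> bool" where
  "Ustep A a c c' \<longleftrightarrow> (\<exists>k. (fst c, replicate k a, fst c') \<in> rules A \<and> 1 \<le> k \<and> snd c = k + snd c')"

lemma grl_reach_unary:
  assumes wf: "wf_grlowjfa A"
    and "(grl_move A)\<^sup>*\<^sup>* ([], p, replicate m a) c"
  shows "\<exists>q m'. c = ([], q, replicate m' a) \<and> (Ustep A a)\<^sup>*\<^sup>* (p, m) (q, m')"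
  using assms(2)
proof (induction rule: rtranclp_induct)
  case base
  then show ?case by auto
next
  case (step y z)
  then obtain q m' where y: "y = ([], q, replicate m' a)" "(Ustep A a)\<^sup>*\<^sup>* (p, m) (q, m')" by blast
  from unary_move[OF wf step(2)[unfolded y(1)]] obtain q' k where
    k: "(q, replicate k a, q') \<in> rules A" "1 \<le> k" "k \<le> m'" "z = ([], q', replicate (m' - k) a)" by blast
  have "Ustep A a (q, m') (q', m' - k)" unfolding Ustep_def using k by auto
  then have "(Ustep A a)\<^sup>*\<^sup>* (p, m) (q', m' - k)" using y(2) by (meson rtranclp.rtrancl_into_rtrancl)
  then show ?case using k(4) by blast
qed

lemma no_subword_nil:
  assumes "wf_grlowjfa A" shows "no_subword_in [] (Sigma_p A p)"
  using assms unfolding no_subword_in_def Sigma_p_def wf_grlowjfa_def by auto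

lemma U_to_grl:
  assumes wf: "wf_grlowjfa A" and "(Ustep A a)\<^sup>*\<^sup>* c c'"
  shows "(grl_move A)\<^sup>*\<^sup>* ([], fst c, replicate (snd c) a) ([], fst c', replicate (snd c') a)"
  using assms(2)
proof (induction rule: rtranclp_induct)
  case base
  then show ?case by simp
next
  case (step y z)
  from step(2) obtain k where k: "(fst y, replicate k a, fst z) \<in> rules A" "1 \<le> k" "snd y = k + snd z"
    unfolding Ustep_def by blast
  have "grl_move A ([], fst y, [] @ replicate k a @ replicate (snd z) a) ([] @ [], fst z, replicate (snd z) a)"
    by (rule jump_delete[OF k(1) no_subword_nil[OF wf]]) simp
  then have "grl_move A ([], fst y, replicate (snd y) a) ([], fst z, replicate (snd z) a)"
    using k(3) by (simp add: replicate_add)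
  then show ?case using step(3) by simp
qed

lemma U_shift:
  assumes "(Ustep A a)\<^sup>*\<^sup>* c c'"
  shows "(Ustep A a)\<^sup>*\<^sup>* (fst c, snd c + d) (fst c', snd c' + d)"
  using assms
proof (induction rule: rtranclp_induct)
  case base
  then show ?case by simp
next
  case (step y z)
  have "Ustep A a (fst y, snd y + d) (fst z, snd z + d)" using step(2) unfolding Ustep_def by auto
  then show ?case using step(3) by simp
qed

lemma U_pump:
  assumes "(Ustep A a)\<^sup>*\<^sup>* (p, m2 + c) (p, m2)"
  shows "(Ustep A a)\<^sup>*\<^sup>* (p, m2 + d * c) (p, m2)"
proof (induction d)
  case 0
  then show ?case by simp
next
  case (Suc d)
  have "(Ustep A a)\<^sup>*\<^sup>* (p, m2 + d * c + c) (p, m2 + c)"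
    using U_shift[OF Suc, of c] by simp
  then show ?case using assms by (simp add: add.commute add.left_commute)
qed

lemma U_len:
  assumes "(Ustep A a ^^ j) c c'" and K: "\<forall>(p, w, q) \<in> rules A. length w \<le> K"
  shows "snd c \<le> j * K + snd c'"
  using assms(1)
proof (induction j arbitrary: c')
  case 0
  then show ?case by simp
next
  case (Suc j)
  then obtain y where y: "(Ustep A a ^^ j) c y" "Ustep A a y c'" by auto
  from y(2) obtain k where "(fst y, replicate k a, fst c') \<in> rules A" "snd y = k + snd c'"
    unfolding Ustep_def by blast
  then have "snd y \<le> K + snd c'" using K by fastforce
  then show ?case using Suc.IH[OF y(1)] by simp
qed

lemma pow2_ap:
  assumes "(2::nat)^k + c = 2^a" "2^k + 2 * c = (2::nat)^b" "c \<ge> 1"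
  shows False
proof -
  have "(2::nat)^a < 2^b" using assms by linarith
  then have "a < b" by simp
  then have "(2::nat)^b \<ge> 2^(Suc a)" by (intro power_increasing) auto
  then have "(2::nat)^b \<ge> 2 * 2^k + 2 * c" using assms(1) by simp
  moreover have "(2::nat)^k \<ge> 1" by simp
  ultimately show False using assms(2) by linarith
qed

lemma chain_star:
  assumes "\<forall>i<j. R (g i) (g (Suc i))" "a \<le> b" "b \<le> j"
  shows "R\<^sup>*\<^sup>* (g a) (g b)"
  using assms(2,3)
proof (induction b)
  case 0
  then show ?case by simp
next
  case (Suc b)
  show ?case
  proof (cases "a = Suc b")
    case True
    then show ?thesis by simp
  next
    case False
    then have "R\<^sup>*\<^sup>* (g a) (g b)" using Suc by simp
    moreover have "R (g b) (g (Suc b))" using assms(1) Suc.prems by simp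
    ultimately show ?thesis by simp
  qed
qed

lemma chain_dec:
  assumes "\<forall>i<j. Ustep A x (g i) (g (Suc i))" "a < b" "b \<le> j"
  shows "snd (g b) < snd (g a)"
  using assms(2,3)
proof (induction b)
  case 0
  then show ?case by simp
next
  case (Suc b)
  have "Ustep A x (g b) (g (Suc b))" using assms(1) Suc.prems by simp
  then have "snd (g (Suc b)) < snd (g b)" unfolding Ustep_def by auto
  then show ?case using Suc by (cases "a = b") auto
qed

lemma Pow2L_notin: "Pow2L \<notin> (GRLOWJ :: nat list set set)"
proof
  assume "Pow2L \<in> (GRLOWJ :: nat list set set)"
  then obtain A :: "(nat, nat) grlowjfa" where wf: "wf_grlowjfa A" and LA: "Pow2L = L_GRL A"
    unfolding GRLOWJ_def by blast
  define N where "N = card (states A)"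
  define K where "K = Max (insert 0 ((\<lambda>(p, w, q). length w) ` rules A))"
  have finr: "finite (rules A)" using wf unfolding wf_grlowjfa_def by blast
  have fins: "finite (states A)" using wf unfolding wf_grlowjfa_def by blast
  have Kb: "\<forall>(p, w, q) \<in> rules A. length w \<le> K"
  proof (intro ballI, clarify)
    fix p w q assume "(p, w, q) \<in> rules A"
    then have "length w \<in> insert 0 ((\<lambda>(p, w, q). length w) ` rules A)" by force
    then show "length w \<le> K" unfolding K_def using finr by (intro Max_ge) auto
  qed
  define n where "n = (2::nat) ^ (N * K + 1)"
  have nbig: "n > N * K" unfolding n_def
    by (metis Suc_eq_plus1 Suc_lessD less_exp)
  have "replicate n 0 \<in> Pow2L" unfolding Pow2L_def n_def by blast
  then have inL: "replicate n 0 \<in> L_GRL A" using LA by simp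
  then obtain qf where qf: "qf \<in> finals A" "(grl_move A)\<^sup>*\<^sup>* ([], init A, replicate n 0) ([], qf, [])"
    and al: "replicate n 0 \<in> lists (alph A)"
    unfolding L_GRL_def by blast
  have npos: "n \<ge> 1" unfolding n_def by simp
  then have a0: "(0::nat) \<in> alph A" using al by (cases n) auto
  from grl_reach_unary[OF wf qf(2)] obtain q m' where
    "([], qf, []) = ([], q, replicate m' (0::nat))" "(Ustep A 0)\<^sup>*\<^sup>* (init A, n) (q, m')" by blast
  then have run: "(Ustep A 0)\<^sup>*\<^sup>* (init A, n) (qf, 0)" by simp
  then obtain j where "(Ustep A 0 ^^ j) (init A, n) (qf, 0)" by (metis rtranclp_power)
  then obtain g where g: "g 0 = (init A, n)" "g j = (qf, 0)" "\<forall>i<j. Ustep A 0 (g i) (g (Suc i))"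
    unfolding relpowp_fun_conv by blast
  have "n \<le> j * K" using U_len[OF \<open>(Ustep A 0 ^^ j) (init A, n) (qf, 0)\<close> Kb] by simp
  then have jN: "j > N" using nbig
    by (metis le_trans mult_le_mono1 not_less)
  have stin: "fst (g i) \<in> states A" if "i \<le> j" for i
  proof (cases i)
    case 0
    then show ?thesis using g(1) wf unfolding wf_grlowjfa_def by simp
  next
    case (Suc i')
    then have "Ustep A 0 (g i') (g i)" using g(3) that by simp
    then obtain k where "(fst (g i'), replicate k 0, fst (g i)) \<in> rules A" unfolding Ustep_def by blast
    then show ?thesis using wf unfolding wf_grlowjfa_def by blast
  qed
  have "\<not> inj_on (fst \<circ> g) {0..j}"
  proof
    assume inj: "inj_on (fst \<circ> g) {0..j}"
    have "(fst \<circ> g) ` {0..j} \<subseteq> states A" using stin by auto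
    then have "card ((fst \<circ> g) ` {0..j}) \<le> N" unfolding N_def using fins by (simp add: card_mono)
    moreover have "card ((fst \<circ> g) ` {0..j}) = Suc j" using card_image[OF inj] by simp
    ultimately show False using jN by simp
  qed
  then obtain i1 i2 where ii: "i1 \<le> j" "i2 \<le> j" "i1 \<noteq> i2" "fst (g i1) = fst (g i2)"
    unfolding inj_on_def by auto
  obtain a b where ab: "a < b" "b \<le> j" "fst (g a) = fst (g b)"
  proof (cases "i1 < i2")
    case True
    then show ?thesis using that ii by blast
  next
    case False
    then show ?thesis using that[of i2 i1] ii by auto
  qed
  define p where "p = fst (g a)"
  define m1 where "m1 = snd (g a)"
  define m2 where "m2 = snd (g b)"
  define c where "c = m1 - m2"
  have m12: "m2 < m1" unfolding m1_def m2_def using chain_dec[OF g(3) ab(1,2)] .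
  have c1: "c \<ge> 1" "m1 = m2 + c" unfolding c_def using m12 by auto
  have s1: "(Ustep A 0)\<^sup>*\<^sup>* (init A, n) (p, m1)"
    using chain_star[where R="Ustep A 0" and g=g and j=j and a=0 and b=a, OF g(3)] ab g(1) unfolding p_def m1_def
    by (metis le0 less_imp_le order.trans prod.collapse)
  have s2: "(Ustep A 0)\<^sup>*\<^sup>* (p, m1) (p, m2)"
    using chain_star[where R="Ustep A 0" and g=g and j=j and a=a and b=b, OF g(3)] ab unfolding p_def m1_def m2_def
    by (metis less_imp_le prod.collapse)
  have s3: "(Ustep A 0)\<^sup>*\<^sup>* (p, m2) (qf, 0)"
    using chain_star[where R="Ustep A 0" and g=g and j=j and a=b and b=j, OF g(3)] ab g(2) unfolding p_def m2_def
    by (metis order.refl prod.collapse)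
  have acc: "replicate (n + d * c) 0 \<in> Pow2L" for d
  proof -
    have "(Ustep A 0)\<^sup>*\<^sup>* (init A, n + d * c) (p, m1 + d * c)"
      using U_shift[OF s1, of "d * c"] by simp
    moreover have "(Ustep A 0)\<^sup>*\<^sup>* (p, m1 + d * c) (p, m2)"
      using U_pump[of A 0 p m2 c "Suc d"] s2 c1 by (simp add: add.assoc)
    ultimately have "(Ustep A 0)\<^sup>*\<^sup>* (init A, n + d * c) (qf, 0)" using s3 by simp
    from U_to_grl[OF wf this] have "(grl_move A)\<^sup>*\<^sup>* ([], init A, replicate (n + d * c) 0) ([], qf, [])"
      by simp
    moreover have "replicate (n + d * c) 0 \<in> lists (alph A)" using a0 by (induction "n + d * c") auto
    ultimately show ?thesis using qf(1) LA unfolding L_GRL_def by blast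
  qed
  have pw: "\<exists>e. n + d * c = 2 ^ e" for d
  proof -
    from acc[of d] obtain e where "replicate (n + d * c) (0::nat) = replicate (2^e) 0"
      unfolding Pow2L_def by blast
    then have "n + d * c = 2 ^ e" by (metis length_replicate)
    then show ?thesis by blast
  qed
  obtain e1 where "n + 1 * c = 2 ^ e1" using pw by blast
  moreover obtain e2 where "n + 2 * c = 2 ^ e2" using pw by blast
  ultimately show False using pow2_ap[of "N * K + 1" c e1 e2] c1 unfolding n_def by simp
qed


abbreviation "tA \<equiv> (Inl 0 :: nat + nat)"
abbreviation "tX \<equiv> (Inr 0 :: nat + nat)"
abbreviation "tL \<equiv> (Inr 1 :: nat + nat)"
abbreviation "tR \<equiv> (Inr 2 :: nat + nat)"

definition delta2 :: "(nat \<times> (nat + nat) \<times> nat \<times> (nat + nat) \<times> int) set" where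
  "delta2 = {(0, tL, 1, tL, 1), (0, tA, 0, tA, -1), (0, tX, 0, tX, -1),
     (1, tX, 1, tX, 1), (2, tX, 2, tX, 1), (3, tX, 3, tX, 1), (4, tX, 4, tX, 1),
     (1, tA, 2, tA, 1), (2, tA, 3, tX, 1), (3, tA, 4, tA, 1), (4, tA, 3, tX, 1),
     (2, tR, 5, tR, 0), (3, tR, 0, tR, -1)}"

definition M2 :: "(nat, nat) lba" where
  "M2 = \<lparr> lba_states = {0..5}, lba_input = {0}, lba_tape = {tA, tX, tL, tR},
         lba_lm = tL, lba_rm = tR, lba_delta = delta2, lba_init = 0, lba_finals = {5} \<rparr>"

lemma wf_M2: "wf_lba M2"
  unfolding wf_lba_def M2_def delta2_def by auto

definition sst :: "nat \<Rightarrow> nat" where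
  "sst s = (if s = 0 then 1 else if s = 1 then 2 else if even s then 3 else 4)"

definition cnt :: "(nat + nat) list \<Rightarrow> nat" where
  "cnt xs = length (filter (\<lambda>s. s = tA) xs)"

lemma cnt_simps[simp]: "cnt [] = 0" "cnt (x # xs) = (if x = tA then 1 else 0) + cnt xs"
  "cnt (xs @ ys) = cnt xs + cnt ys"
  unfolding cnt_def by auto

definition shape :: "nat \<Rightarrow> (nat + nat) list \<Rightarrow> bool" where
  "shape n tp \<longleftrightarrow> (\<exists>cs. tp = tL # cs @ [tR] \<and> set cs \<subseteq> {tA, tX} \<and> length cs = n)"

lemma shape_len: "shape n tp \<Longrightarrow> length tp = n + 2"
  unfolding shape_def by auto

lemma shape_nth:
  assumes "shape n tp" "i < length tp"
  shows "(i = 0 \<and> tp ! i = tL) \<or> (i = n + 1 \<and> tp ! i = tR) \<or> (1 \<le> i \<and> i \<le> n \<and> (tp ! i = tA \<or> tp ! i = tX))"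
proof -
  obtain cs where cs: "tp = tL # cs @ [tR]" "set cs \<subseteq> {tA, tX}" "length cs = n" using assms(1) unfolding shape_def by blast
  show ?thesis
  proof (cases i)
    case 0
    then show ?thesis using cs by simp
  next
    case (Suc k)
    show ?thesis
    proof (cases "k < n")
      case True
      then have "tp ! i = cs ! k" using cs Suc by (simp add: nth_append)
      moreover have "cs ! k \<in> {tA, tX}" using cs True nth_mem by blast
      ultimately show ?thesis using Suc True by auto
    next
      case False
      then have "k = n" using assms(2) cs Suc by simp
      then show ?thesis using cs Suc by (simp add: nth_append)
    qed
  qed
qed

lemma shape_lm: "shape n tp \<Longrightarrow> i < length tp \<Longrightarrow> tp ! i = tL \<longleftrightarrow> i = 0"
  using shape_nth[of n tp i] by auto

lemma shape_rm: "shape n tp \<Longrightarrow> i < length tp \<Longrightarrow> tp ! i = tR \<longleftrightarrow> i = n + 1"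
  using shape_nth[of n tp i] by auto

lemma shape_upd: "shape n tp \<Longrightarrow> tp ! i = tA \<Longrightarrow> i < length tp \<Longrightarrow> shape n (tp[i := tX])"
proof -
  assume s: "shape n tp" and a: "tp ! i = tA" and i: "i < length tp"
  then obtain cs where cs: "tp = tL # cs @ [tR]" "set cs \<subseteq> {tA, tX}" "length cs = n" unfolding shape_def by blast
  have "i \<noteq> 0" "i \<noteq> n + 1" using shape_lm[OF s i] shape_rm[OF s i] a by auto
  then obtain k where k: "i = Suc k" "k < n" using i cs by (cases i) auto
  have "tp[i := tX] = tL # cs[k := tX] @ [tR]" using cs k by (simp add: list_update_append)
  moreover have "set (cs[k := tX]) \<subseteq> {tA, tX}" using cs by (meson insert_subset set_update_subsetI insertI1 insertI2 singletonI)
  ultimately show ?thesis unfolding shape_def using cs by auto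
qed

lemma take_Suc_cnt: "i < length tp \<Longrightarrow> cnt (take (Suc i) tp) = cnt (take i tp) + (if tp ! i = tA then 1 else 0)"
  by (simp add: take_Suc_conv_app_nth)

lemma drop_cnt: "i < length tp \<Longrightarrow> cnt (drop i tp) = (if tp ! i = tA then 1 else 0) + cnt (drop (Suc i) tp)"
  by (metis Cons_nth_drop_Suc cnt_simps(2))

definition Inv2 :: "nat \<Rightarrow> nat \<times> (nat + nat) list \<times> nat \<Rightarrow> bool" where
  "Inv2 n c \<longleftrightarrow> (case c of (q, tp, i) \<Rightarrow> shape n tp \<and> i < length tp \<and>
     (q = 0 \<longrightarrow> i \<le> n \<and> (\<exists>j. cnt tp * 2^j = n)) \<and>
     (q \<in> {1,2,3,4} \<longrightarrow> 1 \<le> i \<and> (\<exists>j s. q = sst s \<and> (s + cnt (drop i tp)) * 2^j = n \<and> cnt (take i tp) = (s + 1) div 2)) \<and>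
     (q = 5 \<longrightarrow> (\<exists>j. n = 2^j)) \<and> q \<le> 5)"

lemma upd_same: "tp ! i = b \<Longrightarrow> tp[i := b] = tp"
  by (metis list_update_id)

lemma sst_cases: "sst s = 1 \<longleftrightarrow> s = 0" "sst s = 2 \<longleftrightarrow> s = 1" "sst s = 3 \<longleftrightarrow> s \<ge> 2 \<and> even s"
  "sst s = 4 \<longleftrightarrow> s \<ge> 2 \<and> odd s" "sst s \<noteq> 0" "sst s \<noteq> 5" "sst s \<in> {1,2,3,4}"
  unfolding sst_def by auto

lemma Inv2I_sweep: "shape n tp \<Longrightarrow> i < length tp \<Longrightarrow> 1 \<le> i \<Longrightarrow> q = sst s \<Longrightarrow>
   (s + cnt (drop i tp)) * 2^j = n \<Longrightarrow> cnt (take i tp) = (s + 1) div 2 \<Longrightarrow> Inv2 n (q, tp, i)"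
proof -
  assume a: "shape n tp" "i < length tp" "1 \<le> i" "q = sst s" "(s + cnt (drop i tp)) * 2^j = n" "cnt (take i tp) = (s + 1) div 2"
  then have "\<exists>j s. q = sst s \<and> (s + cnt (drop i tp)) * 2^j = n \<and> cnt (take i tp) = (s + 1) div 2" by blast
  moreover have "q \<in> {1,2,3,4}" "q \<noteq> 0" "q \<noteq> 5" "q \<le> 5" using a(4) sst_cases(5,6,7)[of s] by auto
  ultimately show ?thesis using a(1,2,3) unfolding Inv2_def prod.case
    by (intro conjI impI) simp_all
qed

lemma Inv2I_ret: "shape n tp \<Longrightarrow> i < length tp \<Longrightarrow> i \<le> n \<Longrightarrow> cnt tp * 2^j = n \<Longrightarrow> q = 0 \<Longrightarrow> Inv2 n (q, tp, i)"
  unfolding Inv2_def by auto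

lemma Inv2I_acc: "shape n tp \<Longrightarrow> i < length tp \<Longrightarrow> n = 2^j \<Longrightarrow> q = 5 \<Longrightarrow> Inv2 n (q, tp, i)"
  unfolding Inv2_def by auto

lemma Inv2_step:
  assumes inv: "Inv2 n (q, tp, i)" and st: "lba_step M2 (q, tp, i) (q', tp', i')"
  shows "Inv2 n (q', tp', i')"
  using st
proof cases
  case (1 b d)
  note tr = 1
  have sh: "shape n tp" and il: "i < length tp" using inv unfolding Inv2_def by auto
  have len: "length tp = n + 2" using shape_len[OF sh] .
  have dl: "(q, tp ! i, q', b, d) \<in> delta2" using tr unfolding M2_def by simp
  consider "i = 0" "tp ! i = tL" | "i = n + 1" "tp ! i = tR" | "1 \<le> i" "i \<le> n" "tp ! i = tA" | "1 \<le> i" "i \<le> n" "tp ! i = tX"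
    using shape_nth[OF sh il] by blast
  then show ?thesis
  proof cases
    case 1
    then have tt: "q = 0" "q' = 1" "b = tL" "d = 1" using dl unfolding delta2_def by auto
    obtain j where j: "cnt tp * 2^j = n" using inv tt unfolding Inv2_def by auto
    have "cnt (drop 1 tp) = cnt tp" using drop_cnt[of 0 tp] il 1 by simp
    moreover have "cnt (take 1 tp) = 0" using take_Suc_cnt[of 0 tp] il 1 by simp
    moreover have "b = tp ! i" using tt 1 by simp
    then have "tp' = tp" using tr by simp
    moreover have "i' = 1" using tr tt 1 by auto
    ultimately show ?thesis using j tt sh len
      by (intro Inv2I_sweep[where s=0 and j=j]) (auto simp: sst_def)
  next
    case 2
    then have tt: "(q = 2 \<and> q' = 5 \<and> b = tR \<and> d = 0) \<or> (q = 3 \<and> q' = 0 \<and> b = tR \<and> d = -1)"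
      using dl unfolding delta2_def by auto
    then have "q \<in> {1,2,3,4}" by auto
    then obtain j s where js: "q = sst s" "(s + cnt (drop i tp)) * 2^j = n" "cnt (take i tp) = (s + 1) div 2"
      using inv unfolding Inv2_def by blast
    have dr: "cnt (drop i tp) = 0" using drop_cnt[of i tp] il 2 len by simp
    have tk: "cnt tp = cnt (take i tp)" using take_Suc_cnt[of i tp] il 2 len by simp
    have "b = tp ! i" using tt 2 by auto
    then have tp': "tp' = tp" using tr by simp
    from tt show ?thesis
    proof
      assume a: "q = 2 \<and> q' = 5 \<and> b = tR \<and> d = 0"
      then have "s = 1" using js sst_cases by auto
      then have "n = 2^j" using js dr by simp
      moreover have "i' = i" using tr a by simp
      ultimately show ?thesis using sh il tp' a by (intro Inv2I_acc) auto
    next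
      assume a: "q = 3 \<and> q' = 0 \<and> b = tR \<and> d = -1"
      then have "s \<ge> 2" "even s" using js sst_cases by auto
      then obtain s2 where "s = 2 * s2" by (auto elim!: evenE)
      then have "cnt tp * 2^(Suc j) = n" using js dr tk by simp
      moreover have "i' = n" using tr a 2 by auto
      ultimately show ?thesis using sh tp' len a by (intro Inv2I_ret[where j="Suc j"]) auto
    qed
  next
    case 3
    then have tt: "(q = 0 \<and> q' = 0 \<and> b = tA \<and> d = -1) \<or> (q = 1 \<and> q' = 2 \<and> b = tA \<and> d = 1) \<or>
       (q = 2 \<and> q' = 3 \<and> b = tX \<and> d = 1) \<or> (q = 3 \<and> q' = 4 \<and> b = tA \<and> d = 1) \<or> (q = 4 \<and> q' = 3 \<and> b = tX \<and> d = 1)"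
      using dl unfolding delta2_def by auto
    show ?thesis
    proof (cases "q = 0")
      case True
      then have "q' = 0" "b = tA" "d = -1" using tt by auto
      then have "b = tp ! i" using 3 by simp
      then have "tp' = tp" using tr by simp
      moreover have "i' = i - 1" using tr \<open>d = -1\<close> 3 by auto
      moreover obtain j where "cnt tp * 2^j = n" using inv True unfolding Inv2_def by auto
      ultimately show ?thesis using sh len 3 \<open>q' = 0\<close> by (intro Inv2I_ret[where j=j]) auto
    next
      case False
      then have q4: "q \<in> {1,2,3,4}" using tt by auto
      obtain j s where js: "q = sst s" "(s + cnt (drop i tp)) * 2^j = n" "cnt (take i tp) = (s + 1) div 2"
        using inv q4 unfolding Inv2_def by blast
      have q'': "q' = sst (Suc s)" "b = (if even s then tA else tX)" "d = 1"
        using tt js(1) False unfolding sst_def by (auto split: if_splits)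
      have tp': "tp' = tp[i := b]" "i' = Suc i" using tr q'' by auto
      have sh': "shape n tp'"
      proof (cases "even s")
        case True
        then have "tp' = tp" using tp' q'' 3 upd_same[of tp i tA] by simp
        then show ?thesis using sh by simp
      next
        case False
        then show ?thesis using tp' q'' sh 3 il shape_upd by simp
      qed
      have d1: "cnt (drop i tp) = 1 + cnt (drop (Suc i) tp)" using drop_cnt[of i tp] il 3 by simp
      have d2: "drop (Suc i) tp' = drop (Suc i) tp" using tp' by simp
      have t1: "take (Suc i) tp' = take i tp @ [b]" using tp' il by (simp add: take_Suc_conv_app_nth take_update_cancel)
      have "cnt (take (Suc i) tp') = (Suc s + 1) div 2"
        using t1 js(3) q''(2) by auto
      moreover have "(Suc s + cnt (drop (Suc i) tp')) * 2^j = n" using d1 d2 js(2) by simp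
      moreover have "Suc i < length tp'" using tp' len 3 by simp
      ultimately show ?thesis using sh' q'' tp' by (intro Inv2I_sweep[where s="Suc s" and j=j]) auto
    qed
  next
    case 4
    then have tt: "q' = q" "b = tX" "d = (if q = 0 then -1 else 1)" "q \<le> 4"
      using dl unfolding delta2_def by auto
    have "b = tp ! i" using tt 4 by simp
    then have tp': "tp' = tp" using tr by simp
    show ?thesis
    proof (cases "q = 0")
      case True
      then have "i' = i - 1" using tr tt by auto
      moreover obtain j where "cnt tp * 2^j = n" using inv True unfolding Inv2_def by auto
      ultimately show ?thesis using sh len 4 tp' True tt by (intro Inv2I_ret[where j=j]) auto
    next
      case False
      then have q4: "q \<in> {1,2,3,4}" using tt by auto
      obtain j s where js: "q = sst s" "(s + cnt (drop i tp)) * 2^j = n" "cnt (take i tp) = (s + 1) div 2"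
        using inv q4 unfolding Inv2_def by blast
      have "i' = Suc i" using tr tt False by auto
      have d1: "cnt (drop i tp) = cnt (drop (Suc i) tp)" using drop_cnt[of i tp] il 4 by simp
      have t1: "cnt (take (Suc i) tp) = cnt (take i tp)" using take_Suc_cnt[of i tp] il 4 by simp
      show ?thesis using js d1 t1 tp' tt \<open>i' = Suc i\<close> sh len 4
        by (intro Inv2I_sweep[where s=s and j=j]) auto
    qed
  qed
qed

lemma Inv2_reach:
  assumes "(lba_step M2)\<^sup>*\<^sup>* c c'" "Inv2 n c"
  shows "Inv2 n c'"
  using assms
proof (induction rule: rtranclp_induct)
  case base
  then show ?case by simp
next
  case (step y z)
  then show ?case using Inv2_step by (metis prod_cases3)
qed

lemma sst_X: "(sst s, tX, sst s, tX, 1) \<in> lba_delta M2"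
  unfolding M2_def delta2_def sst_def by auto

lemma sst_A: "(sst s, tA, sst (Suc s), if even s then tA else tX, 1) \<in> lba_delta M2"
  unfolding M2_def delta2_def sst_def by auto

lemma step_right:
  assumes "Suc i < length tp" "(p, tp ! i, q, b, 1) \<in> lba_delta M"
  shows "lba_step M (p, tp, i) (q, tp[i := b], Suc i)"
proof -
  have "lba_step M (p, tp, i) (q, tp[i := b], nat (int i + 1))"
    by (rule lba_step.intros) (use assms in auto)
  moreover have "nat (int i + 1) = Suc i" by arith
  ultimately show ?thesis by simp
qed

lemma step_left:
  assumes "i < length tp" "(p, tp ! i, q, b, -1) \<in> lba_delta M" "i = Suc k"
  shows "lba_step M (p, tp, i) (q, tp[i := b], k)"
proof -
  have "lba_step M (p, tp, i) (q, tp[i := b], nat (int i + -1))"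
    by (rule lba_step.intros) (use assms in auto)
  then show ?thesis using assms(3) by simp
qed

lemma step_stay:
  assumes "i < length tp" "(p, tp ! i, q, b, 0) \<in> lba_delta M"
  shows "lba_step M (p, tp, i) (q, tp[i := b], i)"
proof -
  have "lba_step M (p, tp, i) (q, tp[i := b], nat (int i + 0))"
    by (rule lba_step.intros) (use assms in auto)
  then show ?thesis by simp
qed

lemma sweep:
  assumes "shape n tp" "1 \<le> i" "i \<le> n + 1"
  shows "\<exists>tp'. (lba_step M2)\<^sup>*\<^sup>* (sst s, tp, i) (sst (s + cnt (drop i tp)), tp', n + 1) \<and> shape n tp' \<and>
     cnt (take (n + 1) tp') + (s + 1) div 2 = cnt (take i tp) + (s + cnt (drop i tp) + 1) div 2"
  using assms
proof (induction "n + 1 - i" arbitrary: i s tp)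
  case 0
  then have i: "i = n + 1" by simp
  have len: "length tp = n + 2" using shape_len[OF 0(2)] .
  have "tp ! i = tR" using shape_rm[OF 0(2)] i len by simp
  then have "cnt (drop i tp) = 0" using drop_cnt[of i tp] i len by simp
  then show ?case using i 0 by auto
next
  case (Suc k)
  have len: "length tp = n + 2" using shape_len[OF Suc(3)] .
  have il: "i \<le> n" "i < length tp" "Suc i < length tp" using Suc(2,5) len by auto
  have kk: "k = n + 1 - Suc i" using Suc(2) by simp
  have sym: "tp ! i = tA \<or> tp ! i = tX" using shape_nth[OF Suc(3) il(2)] il Suc(4) by auto
  then show ?case
  proof
    assume x: "tp ! i = tX"
    have st: "lba_step M2 (sst s, tp, i) (sst s, tp, Suc i)"
      using step_right[OF il(3), where M=M2 and p="sst s" and q="sst s" and b=tX] sst_X x upd_same[of tp i tX] by simp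
    obtain tp' where tp': "(lba_step M2)\<^sup>*\<^sup>* (sst s, tp, Suc i) (sst (s + cnt (drop (Suc i) tp)), tp', n + 1)"
      "shape n tp'" "cnt (take (n + 1) tp') + (s + 1) div 2 = cnt (take (Suc i) tp) + (s + cnt (drop (Suc i) tp) + 1) div 2"
      using Suc(1)[OF kk Suc(3)] il by auto
    have "cnt (drop i tp) = cnt (drop (Suc i) tp)" "cnt (take (Suc i) tp) = cnt (take i tp)"
      using drop_cnt[of i tp] take_Suc_cnt[of i tp] il x by auto
    then show ?thesis using tp' st by (metis converse_rtranclp_into_rtranclp)
  next
    assume a: "tp ! i = tA"
    define b where "b = (if even s then tA else tX)"
    define tp1 where "tp1 = tp[i := b]"
    have st: "lba_step M2 (sst s, tp, i) (sst (Suc s), tp1, Suc i)"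
      using step_right[OF il(3), where M=M2 and p="sst s" and q="sst (Suc s)" and b=b] sst_A a unfolding tp1_def b_def by simp
    have sh1: "shape n tp1"
    proof (cases "even s")
      case True
      then show ?thesis unfolding tp1_def b_def using Suc(3) a upd_same[of tp i tA] by simp
    next
      case False
      then show ?thesis unfolding tp1_def b_def using Suc(3) a il shape_upd by simp
    qed
    obtain tp' where tp': "(lba_step M2)\<^sup>*\<^sup>* (sst (Suc s), tp1, Suc i) (sst (Suc s + cnt (drop (Suc i) tp1)), tp', n + 1)"
      "shape n tp'" "cnt (take (n + 1) tp') + (Suc s + 1) div 2 = cnt (take (Suc i) tp1) + (Suc s + cnt (drop (Suc i) tp1) + 1) div 2"
      using Suc(1)[OF kk sh1, where s="Suc s"] il by fastforce
    have e1: "drop (Suc i) tp1 = drop (Suc i) tp" unfolding tp1_def by simp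
    have e2: "take (Suc i) tp1 = take i tp @ [b]" unfolding tp1_def using il
      by (simp add: take_Suc_conv_app_nth take_update_cancel)
    have e3: "cnt (drop i tp) = 1 + cnt (drop (Suc i) tp)" using drop_cnt[of i tp] il a by simp
    have "(lba_step M2)\<^sup>*\<^sup>* (sst s, tp, i) (sst (s + cnt (drop i tp)), tp', n + 1)"
      using tp'(1) st e1 e3 by (simp add: converse_rtranclp_into_rtranclp)
    moreover have "cnt (take (n + 1) tp') + (s + 1) div 2 = cnt (take i tp) + (s + cnt (drop i tp) + 1) div 2"
      using tp'(3) e1 e2 e3 unfolding b_def by (cases "even s") (auto elim!: evenE oddE)
    ultimately show ?thesis using tp'(2) by blast
  qed
qed

lemma lba_cons: "lba_step M a b \<Longrightarrow> (lba_step M)\<^sup>*\<^sup>* b c \<Longrightarrow> (lba_step M)\<^sup>*\<^sup>* a c"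
  by (rule converse_rtranclp_into_rtranclp)

lemma lba_trans: "(lba_step M)\<^sup>*\<^sup>* a b \<Longrightarrow> (lba_step M)\<^sup>*\<^sup>* b c \<Longrightarrow> (lba_step M)\<^sup>*\<^sup>* a c"
  by (rule rtranclp_trans)

lemma ret_left:
  assumes "shape n tp" "i \<le> n"
  shows "(lba_step M2)\<^sup>*\<^sup>* (0, tp, i) (0, tp, 0)"
  using assms(2)
proof (induction i)
  case 0
  then show ?case by simp
next
  case (Suc k)
  have len: "length tp = n + 2" using shape_len[OF assms(1)] .
  have il: "Suc k < length tp" using Suc len by simp
  have sym: "tp ! Suc k = tA \<or> tp ! Suc k = tX" using shape_nth[OF assms(1) il] Suc by auto
  then have "(0, tp ! Suc k, 0, tp ! Suc k, -1) \<in> lba_delta M2" unfolding M2_def delta2_def by auto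
  then have "lba_step M2 (0, tp, Suc k) (0, tp, k)"
    using step_left[OF il, where M=M2 and p=0 and q=0 and b="tp ! Suc k" and k=k] by simp
  moreover have "(lba_step M2)\<^sup>*\<^sup>* (0, tp, k) (0, tp, 0)" using Suc by simp
  ultimately show ?case by (rule converse_rtranclp_into_rtranclp)
qed

lemma main_loop:
  assumes "shape n tp" "i \<le> n" "cnt tp = 2 ^ m"
  shows "\<exists>tp' i'. (lba_step M2)\<^sup>*\<^sup>* (0, tp, i) (5, tp', i')"
  using assms
proof (induction m arbitrary: tp i)
  case (0 tp i)
  note r1 = ret_left[OF 0(1,2)]
  have len: "length tp = n + 2" using shape_len[OF 0(1)] .
  have "tp ! 0 = tL" using shape_lm[OF 0(1)] len by simp
  then have s1: "lba_step M2 (0, tp, 0) (sst 0, tp, 1)"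
    using step_right[where M=M2 and p=0 and q=1 and b=tL and i=0 and tp=tp] len upd_same[of tp 0 tL]
    unfolding M2_def delta2_def sst_def by simp
  have c1: "cnt (drop 1 tp) = cnt tp" using drop_cnt[of 0 tp] \<open>tp ! 0 = tL\<close> len by simp
  obtain tp' where tp': "(lba_step M2)\<^sup>*\<^sup>* (sst 0, tp, 1) (sst (0 + cnt (drop 1 tp)), tp', n + 1)" "shape n tp'"
    using sweep[OF 0(1), of 1 0] by auto
  have len': "length tp' = n + 2" using shape_len[OF tp'(2)] .
  have "tp' ! (n + 1) = tR" using shape_rm[OF tp'(2)] len' by simp
  moreover have "sst (0 + cnt (drop 1 tp)) = 2" using c1 0(3) by (simp add: sst_def)
  ultimately have "lba_step M2 (sst (0 + cnt (drop 1 tp)), tp', n + 1) (5, tp', n + 1)"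
    using step_stay[where M=M2 and p=2 and q=5 and b=tR and i="n+1" and tp=tp'] len' upd_same[of tp' "n+1" tR]
    unfolding M2_def delta2_def by simp
  then have "(lba_step M2)\<^sup>*\<^sup>* (sst 0, tp, 1) (5, tp', n + 1)" using tp'(1) by simp
  then have "(lba_step M2)\<^sup>*\<^sup>* (0, tp, 0) (5, tp', n + 1)" by (rule lba_cons[OF s1])
  then show ?case using lba_trans[OF r1] by blast
next
  case (Suc m tp i)
  note r1 = ret_left[OF Suc(2,3)]
  have len: "length tp = n + 2" using shape_len[OF Suc(2)] .
  have "tp ! 0 = tL" using shape_lm[OF Suc(2)] len by simp
  then have s1: "lba_step M2 (0, tp, 0) (sst 0, tp, 1)"
    using step_right[where M=M2 and p=0 and q=1 and b=tL and i=0 and tp=tp] len upd_same[of tp 0 tL]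
    unfolding M2_def delta2_def sst_def by simp
  have c1: "cnt (drop 1 tp) = cnt tp" using drop_cnt[of 0 tp] \<open>tp ! 0 = tL\<close> len by simp
  have c0: "cnt (take 1 tp) = 0" using take_Suc_cnt[of 0 tp] \<open>tp ! 0 = tL\<close> len by simp
  obtain tp' where tp': "(lba_step M2)\<^sup>*\<^sup>* (sst 0, tp, 1) (sst (0 + cnt (drop 1 tp)), tp', n + 1)" "shape n tp'"
    "cnt (take (n + 1) tp') + (0 + 1) div 2 = cnt (take 1 tp) + (0 + cnt (drop 1 tp) + 1) div 2"
    using sweep[OF Suc(2), of 1 0] by auto
  have len': "length tp' = n + 2" using shape_len[OF tp'(2)] .
  have rm: "tp' ! (n + 1) = tR" using shape_rm[OF tp'(2)] len' by simp
  have ev: "cnt tp = 2 * 2 ^ m" using Suc(4) by simp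
  then have "sst (0 + cnt (drop 1 tp)) = 3" using c1 by (simp add: sst_def)
  then have s2: "lba_step M2 (sst (0 + cnt (drop 1 tp)), tp', n + 1) (0, tp', n)"
    using step_left[where M=M2 and p=3 and q=0 and b=tR and i="n+1" and tp=tp' and k=n] len' rm upd_same[of tp' "n+1" tR]
    unfolding M2_def delta2_def by simp
  have "cnt tp' = cnt (take (n + 1) tp')"
    using take_Suc_cnt[of "n+1" tp'] rm len' by simp
  then have "cnt tp' = 2 ^ m" using tp'(3) c0 c1 ev by simp
  then obtain tp'' i' where "(lba_step M2)\<^sup>*\<^sup>* (0, tp', n) (5, tp'', i')" using Suc(1)[OF tp'(2)] by blast
  then have "(lba_step M2)\<^sup>*\<^sup>* (sst (0 + cnt (drop 1 tp)), tp', n + 1) (5, tp'', i')"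
    by (rule lba_cons[OF s2])
  then have "(lba_step M2)\<^sup>*\<^sup>* (sst 0, tp, 1) (5, tp'', i')" by (rule lba_trans[OF tp'(1)])
  then have "(lba_step M2)\<^sup>*\<^sup>* (0, tp, 0) (5, tp'', i')" by (rule lba_cons[OF s1])
  then show ?case using lba_trans[OF r1] by blast
qed

lemma Pow2L_in: "Pow2L \<in> (CS :: nat list set set)"
proof -
  have "L_LBA M2 = Pow2L"
  proof
    show "L_LBA M2 \<subseteq> Pow2L"
    proof
      fix w assume "w \<in> L_LBA M2"
      then obtain q tp i where w: "w \<in> lists {0}" "q = 5"
        "(lba_step M2)\<^sup>*\<^sup>* (0, [tL] @ map Inl w @ [tR], 0) (q, tp, i)"
        unfolding L_LBA_def by (auto simp: M2_def)
      have "\<forall>y\<in>set w. y = 0" using w(1) by auto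
      then have wr: "w = replicate (length w) 0" by (simp add: replicate_length_same)
      have "map Inl w = replicate (length w) tA" using \<open>\<forall>y\<in>set w. y = 0\<close>
        by (induction w) auto
      then have "shape (length w) ([tL] @ map Inl w @ [tR])" unfolding shape_def
        by (intro exI[of _ "map Inl w"]) auto
      moreover have "cnt ([tL] @ map Inl w @ [tR]) = length w"
        using \<open>map Inl w = replicate (length w) tA\<close> by (simp add: cnt_def)
      ultimately have "Inv2 (length w) (0, [tL] @ map Inl w @ [tR], 0)"
        by (intro Inv2I_ret[where j=0]) auto
      from Inv2_reach[OF w(3) this] have "Inv2 (length w) (q, tp, i)" .
      then obtain j where "length w = 2 ^ j" using w(2) unfolding Inv2_def by auto
      then have "w = replicate (2 ^ j) 0" using wr by simp
      then show "w \<in> Pow2L" unfolding Pow2L_def by blast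
    qed
  next
    show "Pow2L \<subseteq> L_LBA M2"
    proof
      fix w assume "w \<in> Pow2L"
      then obtain k where w: "w = replicate (2 ^ k) 0" unfolding Pow2L_def by blast
      have "map Inl w = replicate (2 ^ k) tA" using w by simp
      then have sh: "shape (2 ^ k) ([tL] @ map Inl w @ [tR])" unfolding shape_def
        by (intro exI[of _ "map Inl w"]) auto
      have c: "cnt ([tL] @ map Inl w @ [tR]) = 2 ^ k"
        using \<open>map Inl w = replicate (2 ^ k) tA\<close> by (simp add: cnt_def)
      obtain tp' i' where "(lba_step M2)\<^sup>*\<^sup>* (0, [tL] @ map Inl w @ [tR], 0) (5, tp', i')"
        using main_loop[OF sh _ c, of 0] by auto
      moreover have "w \<in> lists {0}" using w by auto
      ultimately show "w \<in> L_LBA M2" unfolding L_LBA_def by (auto simp: M2_def)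
    qed
  qed
  then show ?thesis unfolding CS_def using wf_M2 by blast
qed


datatype st = Start | Main nat | Skip nat "nat list" nat "nat list" | Del "nat list" nat
  | Back nat "nat list" | Ret nat | ChkR | ChkL | Acc

instance st :: countable by countable_datatype

abbreviation "bl \<equiv> (Inr 0 :: nat + nat)"
abbreviation "lmk \<equiv> (Inr 1 :: nat + nat)"
abbreviation "rmk \<equiv> (Inr 2 :: nat + nat)"

definition liv :: "(nat + nat) list \<Rightarrow> nat list" where
  "liv xs = concat (map (\<lambda>s. case s of Inl a \<Rightarrow> [a] | Inr _ \<Rightarrow> []) xs)"

lemma liv_simps[simp]: "liv [] = []" "liv (Inl a # xs) = a # liv xs" "liv (Inr k # xs) = liv xs"
  "liv (xs @ ys) = liv xs @ liv ys" "liv (map Inl w) = w"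
  unfolding liv_def by (auto, induction w, auto)

lemma liv_take_Suc: "i < length tp \<Longrightarrow> liv (take (Suc i) tp) = liv (take i tp) @ liv [tp ! i]"
  by (simp add: take_Suc_conv_app_nth)

lemma liv_drop: "i < length tp \<Longrightarrow> liv (drop i tp) = liv [tp ! i] @ liv (drop (Suc i) tp)"
  by (metis Cons_nth_drop_Suc append_Cons append_Nil liv_simps(4))

lemma liv_single: "liv [Inl a] = [a]" "liv [Inr k] = []" by simp_all

lemma ovl_suffix:
  "(\<exists>u1 u2 x1 x2. u = u1 @ u2 \<and> x = x1 @ x2 \<and> u2 \<noteq> [] \<and> x1 \<noteq> [] \<and> u2 @ x1 = x) \<longleftrightarrow>
   (\<exists>u2 x1. suffix u2 u \<and> u2 \<noteq> [] \<and> x1 \<noteq> [] \<and> prefix x1 x \<and> u2 @ x1 = x)"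
  unfolding suffix_def prefix_def by blast

locale grlA =
  fixes A :: "(nat, nat) grlowjfa"
  assumes wf: "wf_grlowjfa A"
begin

definition K :: nat where
  "K = Max (insert 0 ((\<lambda>(p, w, q). length w) ` rules A))"

lemma finr: "finite (rules A)" using wf unfolding wf_grlowjfa_def by blast
lemma fins: "finite (states A)" using wf unfolding wf_grlowjfa_def by blast
lemma fina: "finite (alph A)" using wf unfolding wf_grlowjfa_def by blast

lemma rule_len: "(p, w, q) \<in> rules A \<Longrightarrow> length w \<le> K"
proof -
  assume "(p, w, q) \<in> rules A"
  then have "length w \<in> insert 0 ((\<lambda>(p, w, q). length w) ` rules A)" by force
  then show "length w \<le> K" unfolding K_def using finr by (intro Max_ge) auto
qed

lemma rule_wf: "(p, w, q) \<in> rules A \<Longrightarrow> p \<in> states A \<and> q \<in> states A \<and> w \<noteq> [] \<and> set w \<subseteq> alph A"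
  using wf unfolding wf_grlowjfa_def by blast

lemma W_len: "s \<in> Sigma_p A p \<Longrightarrow> length s \<le> K"
  unfolding Sigma_p_def using rule_len by blast

lemma W_ne: "s \<in> Sigma_p A p \<Longrightarrow> s \<noteq> []"
  unfolding Sigma_p_def using rule_wf by blast

definition lastK :: "nat list \<Rightarrow> nat list" where
  "lastK xs = drop (length xs - K) xs"

lemma lastK_suffix: "suffix (lastK xs) xs"
  unfolding lastK_def by (simp add: suffix_drop)

lemma lastK_len: "length (lastK xs) \<le> K"
  unfolding lastK_def by simp

lemma lastK_set: "set (lastK xs) \<subseteq> set xs"
  unfolding lastK_def by (simp add: set_drop_subset)

lemma lastK_lastK: "lastK (lastK xs @ ys) = lastK (xs @ ys)"
proof -
  have "drop (length xs - K) xs @ ys = drop (length xs - K) (xs @ ys)" by simp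
  then show ?thesis unfolding lastK_def
    by (simp add: drop_drop) (metis (no_types, lifting) add.commute diff_diff_left diff_le_self le_add_diff_inverse2 length_append nat_le_linear diff_is_0_eq' add_diff_cancel_left')
qed

lemma lastK_Nil[simp]: "lastK [] = []" unfolding lastK_def by simp

lemma suffix_lastK:
  assumes "suffix s xs" "length s \<le> K"
  shows "suffix s (lastK xs)"
proof (rule suffix_length_suffix[OF assms(1) lastK_suffix])
  have "length (lastK xs) = min K (length xs)" unfolding lastK_def by simp
  then show "length s \<le> length (lastK xs)" using assms suffix_length_le by fastforce
qed

definition okb :: "nat \<Rightarrow> nat list \<Rightarrow> nat \<Rightarrow> bool" where
  "okb p b a \<longleftrightarrow> (\<forall>s \<in> Sigma_p A p. \<not> suffix s (b @ [a]))"

definition ovl :: "nat list \<Rightarrow> nat list \<Rightarrow> bool" where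
  "ovl u x \<longleftrightarrow> (\<exists>u1 u2 x1 x2. u = u1 @ u2 \<and> x = x1 @ x2 \<and> u2 \<noteq> [] \<and> x1 \<noteq> [] \<and> u2 @ x1 = x)"

lemma lastK_snoc: "lastK u @ [a] = drop (length u - K) (u @ [a])"
  unfolding lastK_def by simp

lemma okb_iff:
  assumes "no_subword_in u (Sigma_p A p)"
  shows "okb p (lastK u) a \<longleftrightarrow> no_subword_in (u @ [a]) (Sigma_p A p)"
proof
  assume ok: "okb p (lastK u) a"
  show "no_subword_in (u @ [a]) (Sigma_p A p)"
    unfolding no_subword_in_def
  proof
    fix s assume s: "s \<in> Sigma_p A p"
    show "\<not> sublist s (u @ [a])"
    proof
      assume "sublist s (u @ [a])"
      then have "suffix s (u @ [a]) \<or> sublist s u" by (simp add: sublist_snoc)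
      then show False
      proof
        assume sf: "suffix s (u @ [a])"
        have l: "length s \<le> K" using W_len[OF s] .
        have "suffix (lastK u @ [a]) (u @ [a])" using lastK_suffix by (simp add: suffix_def)
        moreover have "length s \<le> length (lastK u @ [a])"
        proof -
          have "length (lastK u) = min K (length u)" unfolding lastK_def by simp
          moreover have "length s \<le> length u + 1" using suffix_length_le[OF sf] by simp
          ultimately show ?thesis using l by simp
        qed
        ultimately have "suffix s (lastK u @ [a])" using suffix_length_suffix[OF sf] by blast
        then show False using ok s unfolding okb_def by blast
      next
        assume "sublist s u"
        then show False using assms s unfolding no_subword_in_def by blast
      qed
    qed
  qed
next
  assume ns: "no_subword_in (u @ [a]) (Sigma_p A p)"
  show "okb p (lastK u) a"
    unfolding okb_def
  proof (intro ballI notI)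
    fix s assume s: "s \<in> Sigma_p A p" and sf: "suffix s (lastK u @ [a])"
    have "suffix (lastK u @ [a]) (u @ [a])" using lastK_suffix by (simp add: suffix_def)
    then have "suffix s (u @ [a])" using sf by (meson suffix_order.trans)
    then have "sublist s (u @ [a])" by auto
    then show False using ns s unfolding no_subword_in_def by blast
  qed
qed

lemma no_subword_snoc_D: "no_subword_in (u @ v) W \<Longrightarrow> no_subword_in u W"
  unfolding no_subword_in_def by (meson sublist_append_rightI sublist_order.order.trans)

lemma no_subword_Nil: "no_subword_in [] (Sigma_p A p)"
  unfolding no_subword_in_def using W_ne by auto

lemma ovl_lastK:
  assumes "length x \<le> K"
  shows "ovl (lastK u) x \<longleftrightarrow> ovl u x"
proof
  assume "ovl (lastK u) x"
  then obtain u2 x1 where h: "suffix u2 (lastK u)" "u2 \<noteq> []" "x1 \<noteq> []" "prefix x1 x" "u2 @ x1 = x"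
    unfolding ovl_def ovl_suffix by blast
  then have "suffix u2 u" using lastK_suffix by (meson suffix_order.trans)
  then show "ovl u x" unfolding ovl_def ovl_suffix using h by blast
next
  assume "ovl u x"
  then obtain u2 x1 where h: "suffix u2 u" "u2 \<noteq> []" "x1 \<noteq> []" "prefix x1 x" "u2 @ x1 = x"
    unfolding ovl_def ovl_suffix by blast
  have "length u2 \<le> K" using h(3,5) assms by (metis le_add1 le_trans length_append)
  then have "suffix u2 (lastK u)" using suffix_lastK h(1) by blast
  then show "ovl (lastK u) x" unfolding ovl_def ovl_suffix using h by blast
qed

end


context grlA
begin

definition Bufs :: "nat list set" where
  "Bufs = {b. set b \<subseteq> alph A \<and> length b \<le> K}"

lemma finite_Bufs: "finite Bufs"
  unfolding Bufs_def using fina by (rule finite_lists_length_le)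

fun okst :: "st \<Rightarrow> bool" where
  "okst (Main p) = (p \<in> states A)"
| "okst (Skip p x q b) = ((p, x, q) \<in> rules A \<and> b \<in> Bufs)"
| "okst (Del x q) = (x \<in> Bufs \<and> q \<in> states A)"
| "okst (Back p b) = (p \<in> states A \<and> b \<in> Bufs)"
| "okst (Ret p) = (p \<in> states A)"
| "okst _ = True"

definition StSet :: "st set" where "StSet = {s. okst s}"

lemma finite_StSet: "finite StSet"
proof -
  have "StSet \<subseteq> {Start, ChkR, ChkL, Acc} \<union> Main ` states A \<union> Ret ` states A \<union>
      (\<lambda>((p, x, q), b). Skip p x q b) ` (rules A \<times> Bufs) \<union> (\<lambda>(x, q). Del x q) ` (Bufs \<times> states A) \<union>
      (\<lambda>(p, b). Back p b) ` (states A \<times> Bufs)"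
  proof
    fix s assume "s \<in> StSet"
    then show "s \<in> {Start, ChkR, ChkL, Acc} \<union> Main ` states A \<union> Ret ` states A \<union>
      (\<lambda>((p, x, q), b). Skip p x q b) ` (rules A \<times> Bufs) \<union> (\<lambda>(x, q). Del x q) ` (Bufs \<times> states A) \<union>
      (\<lambda>(p, b). Back p b) ` (states A \<times> Bufs)"
      unfolding StSet_def
    proof (cases s)
      case (Skip p x q b)
      then show ?thesis using \<open>s \<in> StSet\<close> unfolding StSet_def
        by (auto intro!: image_eqI[where x="((p, x, q), b)"])
    next
      case (Del x q)
      then show ?thesis using \<open>s \<in> StSet\<close> unfolding StSet_def
        by (auto intro!: image_eqI[where x="(x, q)"])
    next
      case (Back p b)
      then show ?thesis using \<open>s \<in> StSet\<close> unfolding StSet_def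
        by (auto intro!: image_eqI[where x="(p, b)"])
    qed (use \<open>s \<in> StSet\<close> in \<open>auto simp: StSet_def\<close>)
  qed
  moreover have "finite ({Start, ChkR, ChkL, Acc} \<union> Main ` states A \<union> Ret ` states A \<union>
      (\<lambda>((p, x, q), b). Skip p x q b) ` (rules A \<times> Bufs) \<union> (\<lambda>(x, q). Del x q) ` (Bufs \<times> states A) \<union>
      (\<lambda>(p, b). Back p b) ` (states A \<times> Bufs))"
    using fins finr finite_Bufs by auto
  ultimately show ?thesis by (rule finite_subset)
qed

definition Tape :: "(nat + nat) set" where "Tape = Inl ` alph A \<union> {bl, lmk, rmk}"

inductive_set Draw :: "(st \<times> (nat + nat) \<times> st \<times> (nat + nat) \<times> int) set" where
  d1: "(Start, lmk, Main (init A), lmk, 1) \<in> Draw"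
| d2: "(p, x, q) \<in> rules A \<Longrightarrow> (Main p, s, Skip p x q [], s, 0) \<in> Draw"
| d3: "(Skip p x q b, bl, Skip p x q b, bl, 1) \<in> Draw"
| d4: "okb p b a \<Longrightarrow> (Skip p x q b, Inl a, Skip p x q (lastK (b @ [a])), Inl a, 1) \<in> Draw"
| d5: "\<not> ovl b x \<Longrightarrow> (Skip p x q b, s, Del x q, s, 0) \<in> Draw"
| d6: "(Del x q, bl, Del x q, bl, 1) \<in> Draw"
| d7: "(Del (a # x) q, Inl a, if x = [] then Main q else Del x q, bl, 1) \<in> Draw"
| d8: "(Main p, s, Back p [], s, 0) \<in> Draw"
| d9: "(Back p b, bl, Back p b, bl, 1) \<in> Draw"
| d10: "okb p b a \<Longrightarrow> (Back p b, Inl a, Back p (lastK (b @ [a])), Inl a, 1) \<in> Draw"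
| d11: "(Back p b, rmk, Ret p, rmk, -1) \<in> Draw"
| d12: "(Ret p, bl, Ret p, bl, -1) \<in> Draw"
| d13: "(Ret p, Inl a, Ret p, Inl a, -1) \<in> Draw"
| d14: "(Ret p, lmk, Main p, lmk, 1) \<in> Draw"
| d15: "p \<in> finals A \<Longrightarrow> (Main p, s, ChkR, s, 0) \<in> Draw"
| d16: "(ChkR, bl, ChkR, bl, 1) \<in> Draw"
| d17: "(ChkR, rmk, ChkL, rmk, -1) \<in> Draw"
| d18: "(ChkL, bl, ChkL, bl, -1) \<in> Draw"
| d19: "(ChkL, lmk, Acc, lmk, 0) \<in> Draw"

definition Box :: "(st \<times> (nat + nat) \<times> st \<times> (nat + nat) \<times> int) set" where
  "Box = StSet \<times> Tape \<times> StSet \<times> Tape \<times> {-1, 0, 1}"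

definition MA :: "(nat, st) lba" where
  "MA = \<lparr> lba_states = StSet, lba_input = alph A, lba_tape = Tape, lba_lm = lmk, lba_rm = rmk,
          lba_delta = Draw \<inter> Box, lba_init = Start, lba_finals = {Acc} \<rparr>"

lemma Draw_lmrm:
  assumes "(p, a, q, b, d) \<in> Draw"
  shows "(a = lmk \<longrightarrow> b = lmk \<and> d \<ge> 0) \<and> (a = rmk \<longrightarrow> b = rmk \<and> d \<le> 0) \<and>
         (a \<noteq> lmk \<longrightarrow> b \<noteq> lmk) \<and> (a \<noteq> rmk \<longrightarrow> b \<noteq> rmk)"
  using assms by (cases rule: Draw.cases) auto

lemma wf_MA: "wf_lba MA"
proof -
  have fb: "finite Box" unfolding Box_def using finite_StSet fina by (auto simp: Tape_def)
  have ft: "finite Tape" using fina by (simp add: Tape_def)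
  have bx: "\<And>p a q b d. (p, a, q, b, d) \<in> Draw \<inter> Box \<Longrightarrow> p \<in> StSet \<and> q \<in> StSet \<and> a \<in> Tape \<and> b \<in> Tape \<and> d \<in> {-1, 0, 1}"
    unfolding Box_def by blast
  have st: "Start \<in> StSet" "Acc \<in> StSet" by (auto simp: StSet_def)
  have tp: "Inl ` alph A \<subseteq> Tape" "lmk \<in> Tape" "rmk \<in> Tape" by (auto simp: Tape_def)
  show ?thesis unfolding wf_lba_def MA_def lba.simps
    apply (intro conjI)
    using finite_StSet fina ft tp st fb apply simp_all
    apply blast
    apply blast
    apply (intro ballI)
    apply clarify
    subgoal for p a q b d
      using bx[of p a q b d] Draw_lmrm[of p a q b d] by simp
    done
qed

end


context grlA
begin

definition shapeA :: "(nat + nat) list \<Rightarrow> bool" where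
  "shapeA tp \<longleftrightarrow> (\<exists>cs. tp = lmk # cs @ [rmk] \<and> set cs \<subseteq> Inl ` alph A \<union> {bl})"

lemma shapeA_nth:
  assumes "shapeA tp" "i < length tp"
  shows "(i = 0 \<and> tp ! i = lmk) \<or> (i = length tp - 1 \<and> 0 < i \<and> tp ! i = rmk) \<or>
         (0 < i \<and> i < length tp - 1 \<and> (tp ! i = bl \<or> (\<exists>a\<in>alph A. tp ! i = Inl a)))"
proof -
  obtain cs where cs: "tp = lmk # cs @ [rmk]" "set cs \<subseteq> Inl ` alph A \<union> {bl}" using assms(1) unfolding shapeA_def by blast
  show ?thesis
  proof (cases i)
    case 0
    then show ?thesis using cs by simp
  next
    case (Suc k)
    show ?thesis
    proof (cases "k < length cs")
      case True
      then have "tp ! i = cs ! k" using cs Suc by (simp add: nth_append)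
      moreover have "cs ! k \<in> Inl ` alph A \<union> {bl}" using cs True nth_mem by blast
      ultimately show ?thesis using Suc True cs by auto
    next
      case False
      then have "k = length cs" using assms(2) cs Suc by simp
      then show ?thesis using cs Suc by (simp add: nth_append)
    qed
  qed
qed

lemma shapeA_len: "shapeA tp \<Longrightarrow> length tp \<ge> 2"
  unfolding shapeA_def by auto

lemma shapeA_lm: "shapeA tp \<Longrightarrow> i < length tp \<Longrightarrow> tp ! i = lmk \<Longrightarrow> i = 0"
  using shapeA_nth by fastforce

lemma shapeA_rm: "shapeA tp \<Longrightarrow> i < length tp \<Longrightarrow> tp ! i = rmk \<Longrightarrow> i = length tp - 1 \<and> 0 < i"
  using shapeA_nth by fastforce

lemma shapeA_bl: "shapeA tp \<Longrightarrow> i < length tp \<Longrightarrow> tp ! i = bl \<Longrightarrow> 0 < i \<and> i < length tp - 1"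
  using shapeA_nth by fastforce

lemma shapeA_Inl: "shapeA tp \<Longrightarrow> i < length tp \<Longrightarrow> tp ! i = Inl a \<Longrightarrow> 0 < i \<and> i < length tp - 1 \<and> a \<in> alph A"
  using shapeA_nth by fastforce

lemma shapeA_upd:
  assumes s: "shapeA tp" and a: "tp ! i = Inl a" and i: "i < length tp"
  shows "shapeA (tp[i := bl])"
proof -
  obtain cs where cs: "tp = lmk # cs @ [rmk]" "set cs \<subseteq> Inl ` alph A \<union> {bl}" using s unfolding shapeA_def by blast
  have "0 < i" "i < length tp - 1" using shapeA_Inl[OF s i a] by auto
  then obtain k where k: "i = Suc k" "k < length cs" using cs by (cases i) auto
  have "tp[i := bl] = lmk # cs[k := bl] @ [rmk]" using cs k by (simp add: list_update_append)
  moreover have "set (cs[k := bl]) \<subseteq> Inl ` alph A \<union> {bl}" using cs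
    by (metis Un_insert_right insert_subset set_update_subsetI insertI1 sup_bot.right_neutral)
  ultimately show ?thesis unfolding shapeA_def by blast
qed

definition GR :: "nat list \<Rightarrow> nat list \<times> nat \<times> nat list \<Rightarrow> bool" where
  "GR w c \<longleftrightarrow> (grl_move A)\<^sup>*\<^sup>* ([], init A, w) c"

lemma GR_step: "GR w c \<Longrightarrow> grl_move A c c' \<Longrightarrow> GR w c'"
  unfolding GR_def by (rule rtranclp.rtrancl_into_rtrancl)

fun InvS :: "nat list \<Rightarrow> st \<Rightarrow> (nat + nat) list \<Rightarrow> nat \<Rightarrow> bool" where
  "InvS w Start tp i = (tp = [lmk] @ map Inl w @ [rmk] \<and> i = 0)"
| "InvS w (Main p) tp i = GR w (liv (take i tp), p, liv (drop i tp))"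
| "InvS w (Skip p x q b) tp i = ((p, x, q) \<in> rules A \<and> (\<exists>t u. GR w (t, p, u @ liv (drop i tp)) \<and>
      liv (take i tp) = t @ u \<and> b = lastK u \<and> no_subword_in u (Sigma_p A p)))"
| "InvS w (Del x q) tp i = (x \<noteq> [] \<and> (\<exists>t p y u x0 x1. GR w (t, p, y) \<and> (p, x0, q) \<in> rules A \<and>
      no_subword_in u (Sigma_p A p) \<and> \<not> ovl u x0 \<and> x0 = x1 @ x \<and> liv (take i tp) = t @ u \<and>
      y = u @ x1 @ liv (drop i tp)))"
| "InvS w (Back p b) tp i = (\<exists>t u. GR w (t, p, u @ liv (drop i tp)) \<and>
      liv (take i tp) = t @ u \<and> b = lastK u \<and> no_subword_in u (Sigma_p A p))"
| "InvS w (Ret p) tp i = GR w ([], p, liv tp)"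
| "InvS w ChkR tp i = (\<exists>qf\<in>finals A. GR w (liv (take i tp), qf, liv (drop i tp)))"
| "InvS w ChkL tp i = (\<exists>qf\<in>finals A. GR w (liv tp, qf, []) \<and> liv (drop (Suc i) tp) = [])"
| "InvS w Acc tp i = (\<exists>qf\<in>finals A. GR w ([], qf, []))"

definition Inv :: "nat list \<Rightarrow> st \<times> (nat + nat) list \<times> nat \<Rightarrow> bool" where
  "Inv w c \<longleftrightarrow> (case c of (s, tp, i) \<Rightarrow> shapeA tp \<and> i < length tp \<and> InvS w s tp i)"

lemma liv_take_bl: "i < length tp \<Longrightarrow> tp ! i = Inr k \<Longrightarrow> liv (take (Suc i) tp) = liv (take i tp)"
  using liv_take_Suc by simp

lemma liv_drop_bl: "i < length tp \<Longrightarrow> tp ! i = Inr k \<Longrightarrow> liv (drop i tp) = liv (drop (Suc i) tp)"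
  using liv_drop by simp

lemma liv_take_Inl: "i < length tp \<Longrightarrow> tp ! i = Inl a \<Longrightarrow> liv (take (Suc i) tp) = liv (take i tp) @ [a]"
  using liv_take_Suc by simp

lemma liv_drop_Inl: "i < length tp \<Longrightarrow> tp ! i = Inl a \<Longrightarrow> liv (drop i tp) = a # liv (drop (Suc i) tp)"
  using liv_drop by simp

lemma liv_drop_last: "shapeA tp \<Longrightarrow> liv (drop (length tp - 1) tp) = []"
  unfolding shapeA_def by auto

lemma liv_take_first: "shapeA tp \<Longrightarrow> liv (take 1 tp) = []"
  unfolding shapeA_def by auto

lemma liv_drop_first: "shapeA tp \<Longrightarrow> liv (drop 1 tp) = liv tp"
  unfolding shapeA_def by auto

lemma liv_take_last: "shapeA tp \<Longrightarrow> liv (take (length tp - 1) tp) = liv tp"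
  unfolding shapeA_def by auto

lemma Inv_step:
  assumes inv: "Inv w (s, tp, i)" and st: "lba_step MA (s, tp, i) (s', tp', i')"
  shows "Inv w (s', tp', i')"
  using st
proof cases
  case (1 b d)
  have sh: "shapeA tp" and il: "i < length tp" and iv: "InvS w s tp i" using inv unfolding Inv_def by auto
  have dr: "(s, tp ! i, s', b, d) \<in> Draw" using 1 unfolding MA_def by simp
  have tp': "tp' = tp[i := b]" and i': "i' = nat (int i + d)" and bnd: "0 \<le> int i + d" "int i + d < int (length tp)"
    using 1 by auto
  have same: "b = tp ! i \<Longrightarrow> tp' = tp" using tp' by simp
  have len2: "length tp \<ge> 2" using shapeA_len[OF sh] .
  have dd: "d = 1 \<Longrightarrow> i' = Suc i" "d = 0 \<Longrightarrow> i' = i" "d = -1 \<Longrightarrow> i' = i - 1"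
  proof -
    show "d = 1 \<Longrightarrow> i' = Suc i" using i' by simp
    show "d = 0 \<Longrightarrow> i' = i" using i' by simp
    show "d = -1 \<Longrightarrow> i' = i - 1" using i' bnd by simp
  qed
  from dr show ?thesis
  proof (cases rule: Draw.cases)
    case d1
    then have "tp' = tp" "i' = 1" using same dd iv by auto
    moreover have "GR w ([], init A, w)" unfolding GR_def by simp
    moreover have "tp = [lmk] @ map Inl w @ [rmk]" using iv d1 by simp
    ultimately show ?thesis using sh len2 d1 unfolding Inv_def by simp
  next
    case (d2 p x q)
    then have "tp' = tp" "i' = i" using same dd by auto
    moreover have "GR w (liv (take i tp), p, [] @ liv (drop i tp))" using iv d2 by simp
    then have "\<exists>t u. GR w (t, p, u @ liv (drop i tp)) \<and> liv (take i tp) = t @ u \<and> [] = lastK u \<and> no_subword_in u (Sigma_p A p)"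
      using no_subword_Nil by (rule_tac exI[of _ "liv (take i tp)"], rule_tac exI[of _ "[]"]) simp
    ultimately show ?thesis using sh il d2 unfolding Inv_def by auto
  next
    case (d3 p x q bf)
    then have "tp' = tp" "i' = Suc i" using same dd by auto
    moreover have "liv (take (Suc i) tp) = liv (take i tp)" "liv (drop (Suc i) tp) = liv (drop i tp)"
      using liv_take_bl[OF il] liv_drop_bl[OF il] d3 by auto
    moreover have "Suc i < length tp" using shapeA_bl[OF sh il] d3 by auto
    ultimately show ?thesis using sh iv d3 unfolding Inv_def by auto
  next
    case (d4 p bf a x q)
    then have "tp' = tp" "i' = Suc i" using same dd by auto
    have e1: "liv (take (Suc i) tp) = liv (take i tp) @ [a]" "liv (drop i tp) = a # liv (drop (Suc i) tp)"
      using liv_take_Inl[OF il] liv_drop_Inl[OF il] d4 by auto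
    have "Suc i < length tp" using shapeA_Inl[OF sh il] d4 by auto
    obtain t u where tu: "GR w (t, p, u @ liv (drop i tp))" "liv (take i tp) = t @ u" "bf = lastK u"
      "no_subword_in u (Sigma_p A p)" "(p, x, q) \<in> rules A" using iv d4 by auto
    have ns: "no_subword_in (u @ [a]) (Sigma_p A p)" using okb_iff[OF tu(4)] d4 tu(3) by simp
    have "lastK (bf @ [a]) = lastK (u @ [a])" using tu(3) lastK_lastK by simp
    moreover have "GR w (t, p, (u @ [a]) @ liv (drop (Suc i) tp))" using tu(1) e1 by simp
    moreover have "liv (take (Suc i) tp) = t @ (u @ [a])" using e1 tu(2) by simp
    ultimately have ex: "\<exists>t' u'. GR w (t', p, u' @ liv (drop (Suc i) tp)) \<and> liv (take (Suc i) tp) = t' @ u' \<and>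
        lastK (bf @ [a]) = lastK u' \<and> no_subword_in u' (Sigma_p A p)"
      using ns by - (rule exI[of _ t], rule exI[of _ "u @ [a]"], simp)
    have "InvS w s' tp' i'" using d4 \<open>tp' = tp\<close> \<open>i' = Suc i\<close> tu(5) ex by simp
    then show ?thesis using sh \<open>tp' = tp\<close> \<open>i' = Suc i\<close> \<open>Suc i < length tp\<close> unfolding Inv_def by simp
  next
    case (d5 bf x p q)
    then have "tp' = tp" "i' = i" using same dd by auto
    obtain t u where tu: "GR w (t, p, u @ liv (drop i tp))" "liv (take i tp) = t @ u" "bf = lastK u"
      "no_subword_in u (Sigma_p A p)" "(p, x, q) \<in> rules A" using iv d5 by auto
    have "x \<noteq> []" "length x \<le> K" using rule_wf[OF tu(5)] rule_len[OF tu(5)] by auto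
    then have "\<not> ovl u x" using ovl_lastK d5 tu(3) by simp
    then have "\<exists>t' p' y u' x0 x1. GR w (t',p',y) \<and> (p',x0,q) \<in> rules A \<and> no_subword_in u' (Sigma_p A p') \<and> \<not> ovl u' x0 \<and>
          x0 = x1 @ x \<and> liv (take i tp) = t' @ u' \<and> y = u' @ x1 @ liv (drop i tp)"
      by - (rule exI[of _ t], rule exI[of _ p], rule exI[of _ "u @ liv (drop i tp)"], rule exI[of _ u], rule exI[of _ x],
            rule exI[of _ "[]"], use tu in simp)
    then have "InvS w (Del x q) tp i" using \<open>x \<noteq> []\<close> by simp
    then show ?thesis using sh il d5 \<open>tp' = tp\<close> \<open>i' = i\<close> unfolding Inv_def by simp
  next
    case (d6 x q)
    then have "tp' = tp" "i' = Suc i" using same dd by auto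
    moreover have "liv (take (Suc i) tp) = liv (take i tp)" "liv (drop (Suc i) tp) = liv (drop i tp)"
      using liv_take_bl[OF il] liv_drop_bl[OF il] d6 by auto
    moreover have "Suc i < length tp" using shapeA_bl[OF sh il] d6 by auto
    ultimately show ?thesis using sh iv d6 unfolding Inv_def by auto
  next
    case (d7 a x q)
    have i'': "i' = Suc i" using i' d7 by auto
    have si: "Suc i < length tp" using shapeA_Inl[OF sh il] d7 by auto
    have sh': "shapeA tp'" using shapeA_upd[OF sh _ il] d7 tp' by simp
    have lt': "length tp' = length tp" using tp' by simp
    have e1: "liv (take (Suc i) tp') = liv (take i tp)"
    proof -
      have "take (Suc i) tp' = take i tp @ [bl]" using tp' il d7 by (simp add: take_Suc_conv_app_nth take_update_cancel)
      then show ?thesis by simp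
    qed
    have e2: "liv (drop (Suc i) tp') = liv (drop (Suc i) tp)" using tp' by simp
    have e3: "liv (drop i tp) = a # liv (drop (Suc i) tp)" using liv_drop_Inl[OF il] d7 by simp
    obtain t p y u x0 x1 where h: "GR w (t, p, y)" "(p, x0, q) \<in> rules A" "no_subword_in u (Sigma_p A p)"
      "\<not> ovl u x0" "x0 = x1 @ a # x" "liv (take i tp) = t @ u" "y = u @ x1 @ liv (drop i tp)"
      using iv d7 by auto
    show ?thesis
    proof (cases "x = []")
      case True
      have "grl_move A (t, p, u @ x0 @ liv (drop (Suc i) tp)) (t @ u, q, liv (drop (Suc i) tp))"
        using jump_delete[OF h(2) h(3)] h(4) unfolding ovl_def by blast
      moreover have "y = u @ x0 @ liv (drop (Suc i) tp)" using h(5,7) e3 True by simp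
      ultimately have "GR w (t @ u, q, liv (drop (Suc i) tp))" using GR_step h(1) by blast
      then have "InvS w s' tp' i'" using d7 True i'' e1 e2 h(6) by simp
      then show ?thesis using sh' si lt' i'' unfolding Inv_def by simp
    next
      case False
      have "\<exists>t p y u x0 x1. GR w (t,p,y) \<and> (p,x0,q) \<in> rules A \<and> no_subword_in u (Sigma_p A p) \<and> \<not> ovl u x0 \<and>
          x0 = x1 @ x \<and> liv (take (Suc i) tp') = t @ u \<and> y = u @ x1 @ liv (drop (Suc i) tp')"
        by (rule exI[of _ t], rule exI[of _ p], rule exI[of _ y], rule exI[of _ u], rule exI[of _ x0],
            rule exI[of _ "x1 @ [a]"]) (use h e1 e2 e3 in simp)
      then have "InvS w (Del x q) tp' (Suc i)" using False by simp
      then show ?thesis using sh' si lt' i'' d7 False unfolding Inv_def by simp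
    qed
  next
    case (d8 p)
    then have "tp' = tp" "i' = i" using same dd by auto
    moreover have "GR w (liv (take i tp), p, [] @ liv (drop i tp))" using iv d8 by simp
    then have "\<exists>t u. GR w (t, p, u @ liv (drop i tp)) \<and> liv (take i tp) = t @ u \<and> [] = lastK u \<and> no_subword_in u (Sigma_p A p)"
      using no_subword_Nil by (rule_tac exI[of _ "liv (take i tp)"], rule_tac exI[of _ "[]"]) simp
    ultimately show ?thesis using sh il d8 unfolding Inv_def by auto
  next
    case (d9 p bf)
    then have "tp' = tp" "i' = Suc i" using same dd by auto
    moreover have "liv (take (Suc i) tp) = liv (take i tp)" "liv (drop (Suc i) tp) = liv (drop i tp)"
      using liv_take_bl[OF il] liv_drop_bl[OF il] d9 by auto
    moreover have "Suc i < length tp" using shapeA_bl[OF sh il] d9 by auto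
    ultimately show ?thesis using sh iv d9 unfolding Inv_def by auto
  next
    case (d10 p bf a)
    then have "tp' = tp" "i' = Suc i" using same dd by auto
    have e1: "liv (take (Suc i) tp) = liv (take i tp) @ [a]" "liv (drop i tp) = a # liv (drop (Suc i) tp)"
      using liv_take_Inl[OF il] liv_drop_Inl[OF il] d10 by auto
    have "Suc i < length tp" using shapeA_Inl[OF sh il] d10 by auto
    obtain t u where tu: "GR w (t, p, u @ liv (drop i tp))" "liv (take i tp) = t @ u" "bf = lastK u"
      "no_subword_in u (Sigma_p A p)" using iv d10 by auto
    have ns: "no_subword_in (u @ [a]) (Sigma_p A p)" using okb_iff[OF tu(4)] d10 tu(3) by simp
    have "lastK (bf @ [a]) = lastK (u @ [a])" using tu(3) lastK_lastK by simp
    moreover have "GR w (t, p, (u @ [a]) @ liv (drop (Suc i) tp))" using tu(1) e1 by simp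
    moreover have "liv (take (Suc i) tp) = t @ (u @ [a])" using e1 tu(2) by simp
    ultimately have ex: "\<exists>t' u'. GR w (t', p, u' @ liv (drop (Suc i) tp)) \<and> liv (take (Suc i) tp) = t' @ u' \<and>
        lastK (bf @ [a]) = lastK u' \<and> no_subword_in u' (Sigma_p A p)"
      using ns by - (rule exI[of _ t], rule exI[of _ "u @ [a]"], simp)
    have "InvS w s' tp' i'" using d10 \<open>tp' = tp\<close> \<open>i' = Suc i\<close> ex by simp
    then show ?thesis using sh \<open>tp' = tp\<close> \<open>i' = Suc i\<close> \<open>Suc i < length tp\<close> unfolding Inv_def by simp
  next
    case (d11 p bf)
    have ii: "i = length tp - 1" "0 < i" using shapeA_rm[OF sh il] d11 by auto
    then have "tp' = tp" "i' = i - 1" using same dd d11 by auto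
    obtain t u where tu: "GR w (t, p, u @ liv (drop i tp))" "liv (take i tp) = t @ u"
      "no_subword_in u (Sigma_p A p)" using iv d11 by auto
    have dl: "liv (drop i tp) = []" using liv_drop_last[OF sh] ii by simp
    have lt: "liv tp = t @ u" using liv_take_last[OF sh] ii tu(2) by simp
    have "GR w ([], p, t @ u)"
    proof (cases "t = []")
      case True
      then show ?thesis using tu(1) dl by simp
    next
      case False
      have "grl_move A (t, p, u) ([], p, t @ u)" by (rule jump_back[OF False tu(3)])
      then show ?thesis using GR_step tu(1) dl by auto
    qed
    then show ?thesis using sh il ii d11 lt \<open>tp' = tp\<close> \<open>i' = i - 1\<close> unfolding Inv_def by simp
  next
    case (d12 p)
    then have "tp' = tp" "i' = i - 1" using same dd by auto
    then show ?thesis using sh il iv d12 unfolding Inv_def by auto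
  next
    case (d13 p a)
    then have "tp' = tp" "i' = i - 1" using same dd by auto
    then show ?thesis using sh il iv d13 unfolding Inv_def by auto
  next
    case (d14 p)
    have "i = 0" using shapeA_lm[OF sh il] d14 by simp
    then have "tp' = tp" "i' = 1" using same dd d14 by auto
    then show ?thesis using sh iv d14 len2 liv_take_first[OF sh] liv_drop_first[OF sh] unfolding Inv_def by simp
  next
    case (d15 p)
    then have "tp' = tp" "i' = i" using same dd by auto
    then show ?thesis using sh il iv d15 unfolding Inv_def by auto
  next
    case d16
    then have "tp' = tp" "i' = Suc i" using same dd by auto
    moreover have "liv (take (Suc i) tp) = liv (take i tp)" "liv (drop (Suc i) tp) = liv (drop i tp)"
      using liv_take_bl[OF il] liv_drop_bl[OF il] d16 by auto
    moreover have "Suc i < length tp" using shapeA_bl[OF sh il] d16 by auto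
    ultimately show ?thesis using sh iv d16 unfolding Inv_def by auto
  next
    case d17
    have ii: "i = length tp - 1" "0 < i" using shapeA_rm[OF sh il] d17 by auto
    then have "tp' = tp" "i' = i - 1" using same dd d17 by auto
    have dl: "liv (drop i tp) = []" using liv_drop_last[OF sh] ii by simp
    have lt: "liv (take i tp) = liv tp" using liv_take_last[OF sh] ii by simp
    have "Suc (i - 1) = i" using ii by simp
    then show ?thesis using sh il iv d17 dl lt \<open>tp' = tp\<close> \<open>i' = i - 1\<close> unfolding Inv_def by auto
  next
    case d18
    have ii: "0 < i" using shapeA_bl[OF sh il] d18 by auto
    then have "tp' = tp" "i' = i - 1" using same dd d18 by auto
    have "liv (drop i tp) = liv (drop (Suc i) tp)" using liv_drop_bl[OF il] d18 by auto
    moreover have "Suc (i - 1) = i" using ii by simp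
    ultimately show ?thesis using sh il iv d18 \<open>tp' = tp\<close> \<open>i' = i - 1\<close> unfolding Inv_def by auto
  next
    case d19
    have "i = 0" using shapeA_lm[OF sh il] d19 by simp
    then have "tp' = tp" "i' = 0" using same dd d19 by auto
    have "liv tp = []" using iv d19 \<open>i = 0\<close> liv_drop_first[OF sh] by auto
    then show ?thesis using sh il iv d19 \<open>tp' = tp\<close> \<open>i' = 0\<close> \<open>i = 0\<close> unfolding Inv_def by auto
  qed
qed

end


context grlA
begin

lemma Inv_reach:
  assumes "(lba_step MA)\<^sup>*\<^sup>* c c'" "Inv w c"
  shows "Inv w c'"
  using assms
proof (induction rule: rtranclp_induct)
  case base
  then show ?case by simp
next
  case (step y z)
  then show ?case using Inv_step by (metis prod_cases3)
qed

lemma shapeA_init: "w \<in> lists (alph A) \<Longrightarrow> shapeA ([lmk] @ map Inl w @ [rmk])"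
  unfolding shapeA_def by auto

lemma LBA_sub: "L_LBA MA \<subseteq> L_GRL A"
proof
  fix w assume "w \<in> L_LBA MA"
  then obtain tp i where w: "w \<in> lists (alph A)"
    "(lba_step MA)\<^sup>*\<^sup>* (Start, [lmk] @ map Inl w @ [rmk], 0) (Acc, tp, i)"
    unfolding L_LBA_def by (auto simp: MA_def)
  have "Inv w (Start, [lmk] @ map Inl w @ [rmk], 0)" unfolding Inv_def using shapeA_init[OF w(1)] by simp
  from Inv_reach[OF w(2) this] obtain qf where "qf \<in> finals A" "GR w ([], qf, [])" unfolding Inv_def by auto
  then show "w \<in> L_GRL A" unfolding L_GRL_def GR_def using w(1) by blast
qed

lemma stepR: "Suc i < length tp \<Longrightarrow> tp ! i = c \<Longrightarrow> (p, c, q, c, 1) \<in> lba_delta M \<Longrightarrow> lba_step M (p, tp, i) (q, tp, Suc i)"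
  using step_right[where i=i and tp=tp and p=p and q=q and b=c and M=M] upd_same[of tp i c] by simp

lemma stepL: "i < length tp \<Longrightarrow> i = Suc k \<Longrightarrow> tp ! i = c \<Longrightarrow> (p, c, q, c, -1) \<in> lba_delta M \<Longrightarrow> lba_step M (p, tp, i) (q, tp, k)"
  using step_left[where i=i and tp=tp and p=p and q=q and b=c and M=M and k=k] upd_same[of tp i c] by simp

lemma stepS: "i < length tp \<Longrightarrow> tp ! i = c \<Longrightarrow> (p, c, q, c, 0) \<in> lba_delta M \<Longrightarrow> lba_step M (p, tp, i) (q, tp, i)"
  using step_stay[where i=i and tp=tp and p=p and q=q and b=c and M=M] upd_same[of tp i c] by simp

lemma inD: "t \<in> Draw \<Longrightarrow> t \<in> Box \<Longrightarrow> t \<in> lba_delta MA"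
  by (simp add: MA_def)

lemma shapeA_Tape: "shapeA tp \<Longrightarrow> i < length tp \<Longrightarrow> tp ! i \<in> Tape"
  using shapeA_nth[of tp i] unfolding Tape_def by auto

lemma Tape_simps: "bl \<in> Tape" "lmk \<in> Tape" "rmk \<in> Tape" "a \<in> alph A \<Longrightarrow> Inl a \<in> Tape"
  unfolding Tape_def by auto

lemma lastK_Bufs: "set u \<subseteq> alph A \<Longrightarrow> lastK u \<in> Bufs"
  unfolding Bufs_def using lastK_len lastK_set by blast

lemma Nil_Bufs: "[] \<in> Bufs" unfolding Bufs_def by simp

lemma inBox: "s \<in> StSet \<Longrightarrow> c \<in> Tape \<Longrightarrow> s' \<in> StSet \<Longrightarrow> c' \<in> Tape \<Longrightarrow> d \<in> {-1, 0, 1} \<Longrightarrow> (s, c, s', c', d) \<in> Box"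
  unfolding Box_def by simp

lemma St_simps: "okst s \<Longrightarrow> s \<in> StSet" unfolding StSet_def by simp

lemma blanks_right:
  assumes tr: "(S, bl, S, bl, 1) \<in> lba_delta MA"
    and "shapeA tp" "0 < i" "i < length tp" "liv (drop i tp) = []"
  shows "(lba_step MA)\<^sup>*\<^sup>* (S, tp, i) (S, tp, length tp - 1)"
  using assms(2-)
proof (induction "length tp - i" arbitrary: i)
  case 0
  then show ?case by simp
next
  case (Suc k)
  consider "i = length tp - 1" | "tp ! i = bl" "i < length tp - 1" | a where "tp ! i = Inl a"
    using shapeA_nth[OF Suc(3) Suc(5)] Suc(4) by auto
  then show ?case
  proof cases
    case 1
    then show ?thesis by simp
  next
    case 2
    have st: "lba_step MA (S, tp, i) (S, tp, Suc i)"
      using stepR[of i tp bl S S MA] tr 2 Suc(5) by simp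
    have "liv (drop (Suc i) tp) = []" using liv_drop_bl[OF Suc(5)] 2 Suc(6) by simp
    then have "(lba_step MA)\<^sup>*\<^sup>* (S, tp, Suc i) (S, tp, length tp - 1)"
      using Suc(1)[of "Suc i"] Suc(2,3) 2 by auto
    then show ?thesis by (rule lba_cons[OF st])
  next
    case 3
    then show ?thesis using liv_drop_Inl[OF Suc(5)] Suc(6) by simp
  qed
qed

lemma left_run:
  assumes "i < length tp" "\<And>k. 0 < k \<Longrightarrow> k \<le> i \<Longrightarrow> (S, tp ! k, S, tp ! k, -1) \<in> lba_delta MA"
  shows "(lba_step MA)\<^sup>*\<^sup>* (S, tp, i) (S, tp, 0)"
  using assms
proof (induction i)
  case 0
  then show ?case by simp
next
  case (Suc k)
  have "lba_step MA (S, tp, Suc k) (S, tp, k)"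
    using stepL[OF Suc(2), of k "tp ! Suc k" S S MA] Suc(3)[of "Suc k"] by simp
  moreover have "(lba_step MA)\<^sup>*\<^sup>* (S, tp, k) (S, tp, 0)" using Suc by simp
  ultimately show ?case by (rule lba_cons)
qed

lemma scan:
  assumes trb: "\<And>b. b \<in> Bufs \<Longrightarrow> (S b, bl, S b, bl, 1) \<in> lba_delta MA"
    and tra: "\<And>b a. b \<in> Bufs \<Longrightarrow> a \<in> alph A \<Longrightarrow> okb p b a \<Longrightarrow> (S b, Inl a, S (lastK (b @ [a])), Inl a, 1) \<in> lba_delta MA"
    and "shapeA tp" "0 < i" "i < length tp" "liv (drop i tp) = u @ z"
    "no_subword_in (pre @ u) (Sigma_p A p)" "set pre \<subseteq> alph A"
  shows "\<exists>j. 0 < j \<and> j < length tp \<and> liv (take j tp) = liv (take i tp) @ u \<and> liv (drop j tp) = z \<and>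
    (lba_step MA)\<^sup>*\<^sup>* (S (lastK pre), tp, i) (S (lastK (pre @ u)), tp, j)"
  using assms(3-)
proof (induction "length tp - i" arbitrary: i u pre)
  case 0
  then show ?case by simp
next
  case (Suc k)
  note sh = Suc(3) and ipos = Suc(4) and il = Suc(5) and ld = Suc(6) and ns = Suc(7) and su = Suc(8)
  have kk: "k = length tp - Suc i" using Suc(2) by arith
  show ?case
  proof (cases u)
    case Nil
    then show ?thesis using ipos il ld by (intro exI[of _ i]) simp
  next
    case (Cons a u')
    consider "tp ! i = bl" | c where "tp ! i = Inl c" | "tp ! i = rmk" | "tp ! i = lmk"
      using shapeA_nth[OF sh il] by auto
    then show ?thesis
    proof cases
      case 1
      have si: "Suc i < length tp" using shapeA_bl[OF sh il 1] by linarith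
      have st: "lba_step MA (S (lastK pre), tp, i) (S (lastK pre), tp, Suc i)"
        using stepR[OF si 1 trb[OF lastK_Bufs[OF su]]] .
      have "liv (drop (Suc i) tp) = u @ z" using liv_drop_bl[OF il 1] ld by simp
      then obtain j where j: "0 < j" "j < length tp" "liv (take j tp) = liv (take (Suc i) tp) @ u" "liv (drop j tp) = z"
        "(lba_step MA)\<^sup>*\<^sup>* (S (lastK pre), tp, Suc i) (S (lastK (pre @ u)), tp, j)"
        using Suc(1)[where u=u and pre=pre, OF kk sh _ si] ns su by auto
      moreover have "liv (take (Suc i) tp) = liv (take i tp)" using liv_take_bl[OF il 1] .
      ultimately show ?thesis using lba_cons[OF st] by metis
    next
      case 2
      have ca: "c = a" "liv (drop (Suc i) tp) = u' @ z" using liv_drop_Inl[OF il 2] ld Cons by auto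
      have si: "Suc i < length tp" "c \<in> alph A" using shapeA_Inl[OF sh il 2] by auto
      have ns0: "no_subword_in pre (Sigma_p A p)" using ns no_subword_snoc_D by blast
      have ns1: "no_subword_in (pre @ [a]) (Sigma_p A p)" using ns Cons no_subword_snoc_D[of "pre @ [a]" u'] by simp
      have ok: "okb p (lastK pre) a" using okb_iff[OF ns0] ns1 by simp
      have st: "lba_step MA (S (lastK pre), tp, i) (S (lastK (pre @ [a])), tp, Suc i)"
        using stepR[OF si(1) 2 tra[OF lastK_Bufs[OF su] si(2)]] ok ca lastK_lastK by simp
      obtain j where j: "0 < j" "j < length tp" "liv (take j tp) = liv (take (Suc i) tp) @ u'" "liv (drop j tp) = z"
        "(lba_step MA)\<^sup>*\<^sup>* (S (lastK (pre @ [a])), tp, Suc i) (S (lastK ((pre @ [a]) @ u')), tp, j)"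
        using Suc(1)[where pre="pre @ [a]" and u=u', OF kk sh _ si(1) ca(2)] ns su ca Cons si(2) by auto
      moreover have "liv (take (Suc i) tp) = liv (take i tp) @ [a]" using liv_take_Inl[OF il 2] ca by simp
      ultimately show ?thesis using lba_cons[OF st] Cons by (metis append.assoc append_Cons append_Nil)
    next
      case 3
      then show ?thesis using shapeA_rm[OF sh il 3] liv_drop_last[OF sh] ld Cons by simp
    next
      case 4
      then show ?thesis using shapeA_lm[OF sh il 4] ipos by simp
    qed
  qed
qed

lemma del_run:
  assumes "shapeA tp" "0 < j" "j < length tp" "liv (drop j tp) = x @ v" "x \<noteq> []" "x \<in> Bufs" "q \<in> states A"
  shows "\<exists>tp' j'. (lba_step MA)\<^sup>*\<^sup>* (Del x q, tp, j) (Main q, tp', j') \<and> shapeA tp' \<and> 0 < j' \<and> j' < length tp' \<and>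
     liv (take j' tp') = liv (take j tp) \<and> liv (drop j' tp') = v"
  using assms
proof (induction "length tp - j" arbitrary: j x tp)
  case 0
  then show ?case by simp
next
  case (Suc k)
  note sh = Suc(3) and ipos = Suc(4) and il = Suc(5) and ld = Suc(6) and xne = Suc(7) and xb = Suc(8) and qs = Suc(9)
  have kk: "k = length tp - Suc j" using Suc(2) by arith
  have dS: "Del x q \<in> StSet" using xb qs by (simp add: StSet_def)
  consider "tp ! j = bl" | c where "tp ! j = Inl c" | "tp ! j = rmk" | "tp ! j = lmk"
    using shapeA_nth[OF sh il] by auto
  then show ?case
  proof cases
    case 1
    have si: "Suc j < length tp" using shapeA_bl[OF sh il 1] by linarith
    have "(Del x q, bl, Del x q, bl, 1) \<in> lba_delta MA"
      by (rule inD[OF Draw.d6 inBox]) (use dS Tape_simps in auto)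
    then have st: "lba_step MA (Del x q, tp, j) (Del x q, tp, Suc j)" by (rule stepR[OF si 1])
    have "liv (drop (Suc j) tp) = x @ v" using liv_drop_bl[OF il 1] ld by simp
    then obtain tp' j' where r: "(lba_step MA)\<^sup>*\<^sup>* (Del x q, tp, Suc j) (Main q, tp', j')" "shapeA tp'" "0 < j'" "j' < length tp'"
     "liv (take j' tp') = liv (take (Suc j) tp)" "liv (drop j' tp') = v"
      using Suc(1)[where x=x, OF kk sh _ si _ xne xb qs] by auto
    have "liv (take (Suc j) tp) = liv (take j tp)" using liv_take_bl[OF il 1] .
    moreover have "(lba_step MA)\<^sup>*\<^sup>* (Del x q, tp, j) (Main q, tp', j')" using lba_cons[OF st r(1)] .
    ultimately show ?thesis using r(2-6) by (intro exI[of _ tp'] exI[of _ j']) simp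
  next
    case 2
    obtain x' where x: "x = c # x'" and e3: "liv (drop (Suc j) tp) = x' @ v"
      using liv_drop_Inl[OF il 2] ld xne by (cases x) auto
    have si: "Suc j < length tp" "c \<in> alph A" using shapeA_Inl[OF sh il 2] by auto
    define tp1 where "tp1 = tp[j := bl]"
    have sh1: "shapeA tp1" unfolding tp1_def using shapeA_upd[OF sh 2 il] .
    have l1: "length tp1 = length tp" unfolding tp1_def by simp
    have e1: "liv (take (Suc j) tp1) = liv (take j tp)"
    proof -
      have "take (Suc j) tp1 = take j tp @ [bl]" unfolding tp1_def using il by (simp add: take_Suc_conv_app_nth take_update_cancel)
      then show ?thesis by simp
    qed
    have e2: "liv (drop (Suc j) tp1) = x' @ v" unfolding tp1_def using e3 by simp
    have x'b: "x' \<in> Bufs" using xb x unfolding Bufs_def by auto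
    have tS: "(if x' = [] then Main q else Del x' q) \<in> StSet" using qs x'b by (simp add: StSet_def)
    have "(Del (c # x') q, Inl c, if x' = [] then Main q else Del x' q, bl, 1) \<in> lba_delta MA"
      by (rule inD[OF Draw.d7 inBox]) (use dS x tS si(2) in \<open>simp_all add: Tape_simps\<close>)
    then have st: "lba_step MA (Del x q, tp, j) (if x' = [] then Main q else Del x' q, tp1, Suc j)"
      using step_right[where i=j and tp=tp and p="Del x q" and b=bl and M=MA] si 2 x unfolding tp1_def by simp
    show ?thesis
    proof (cases "x' = []")
      case True
      have rr: "(lba_step MA)\<^sup>*\<^sup>* (Del x q, tp, j) (Main q, tp1, Suc j)" using st True by simp
      show ?thesis by (rule exI[of _ tp1], rule exI[of _ "Suc j"]) (use rr sh1 si l1 e1 e2 True in simp)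
    next
      case False
      obtain tp' j' where r: "(lba_step MA)\<^sup>*\<^sup>* (Del x' q, tp1, Suc j) (Main q, tp', j')" "shapeA tp'" "0 < j'" "j' < length tp'"
        "liv (take j' tp') = liv (take (Suc j) tp1)" "liv (drop j' tp') = v"
      proof -
        have kk1: "k = length tp1 - Suc j" using kk l1 by simp
        have si1: "Suc j < length tp1" using si l1 by simp
        show ?thesis using Suc(1)[where x=x' and tp=tp1 and j="Suc j", OF kk1 sh1 _ si1 e2 False x'b qs] that by blast
      qed
      have rr: "(lba_step MA)\<^sup>*\<^sup>* (Del x q, tp, j) (Main q, tp', j')" using lba_cons[OF st] r(1) False by simp
      show ?thesis by (rule exI[of _ tp'], rule exI[of _ j']) (use rr r(2-6) e1 in simp)
    qed
  next
    case 3
    then show ?thesis using shapeA_rm[OF sh il 3] liv_drop_last[OF sh] ld xne by simp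
  next
    case 4
    then show ?thesis using shapeA_lm[OF sh il 4] ipos by simp
  qed
qed

lemma liv_split: "liv tp = liv (take i tp) @ liv (drop i tp)"
  by (metis append_take_drop_id liv_simps(4))

lemma set_liv_gen: "(\<And>a. Inl a \<in> set xs \<Longrightarrow> a \<in> alph A) \<Longrightarrow> set (liv xs) \<subseteq> alph A"
proof (induction xs)
  case Nil
  then show ?case by simp
next
  case (Cons s xs)
  then show ?case by (cases s) auto
qed

lemma set_liv: "shapeA tp \<Longrightarrow> set (liv tp) \<subseteq> alph A"
  unfolding shapeA_def by (intro set_liv_gen) auto

lemma set_liv_drop: "shapeA tp \<Longrightarrow> set (liv (drop i tp)) \<subseteq> alph A"
  using set_liv[of tp] liv_split[of tp i] by auto

lemma Skip_St: "(p, x, q) \<in> rules A \<Longrightarrow> b \<in> Bufs \<Longrightarrow> Skip p x q b \<in> StSet"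
  by (simp add: StSet_def)

lemma Back_St: "p \<in> states A \<Longrightarrow> b \<in> Bufs \<Longrightarrow> Back p b \<in> StSet"
  by (simp add: StSet_def)

lemma Main_St: "p \<in> states A \<Longrightarrow> Main p \<in> StSet" by (simp add: StSet_def)
lemma Ret_St: "p \<in> states A \<Longrightarrow> Ret p \<in> StSet" by (simp add: StSet_def)
lemma Del_St: "x \<in> Bufs \<Longrightarrow> q \<in> states A \<Longrightarrow> Del x q \<in> StSet" by (simp add: StSet_def)
lemma Chk_St: "ChkR \<in> StSet" "ChkL \<in> StSet" "Acc \<in> StSet" "Start \<in> StSet" by (simp_all add: StSet_def)

lemma Bufs_snoc: "b \<in> Bufs \<Longrightarrow> a \<in> alph A \<Longrightarrow> lastK (b @ [a]) \<in> Bufs"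
  using lastK_Bufs[of "b @ [a]"] unfolding Bufs_def by auto

lemma rule_Bufs: "(p, x, q) \<in> rules A \<Longrightarrow> x \<in> Bufs"
  using rule_wf rule_len unfolding Bufs_def by blast

lemma grl_move_cases':
  assumes "grl_move A (t, p, y) (t', p', y')"
  shows "(\<exists>x q u v. (p, x, q) \<in> rules A \<and> no_subword_in u (Sigma_p A p) \<and> \<not> ovl u x \<and> y = u @ x @ v \<and>
            t' = t @ u \<and> p' = q \<and> y' = v) \<or>
         (t \<noteq> [] \<and> no_subword_in y (Sigma_p A p) \<and> t' = [] \<and> p' = p \<and> y' = t @ y)"
  using assms by (cases rule: grl_move.cases) (auto simp: ovl_def)

lemma sim_move:
  assumes mv: "grl_move A (t, p, y) (t', p', y')" and sh: "shapeA tp" and ip: "0 < i" and il: "i < length tp"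
    and lt: "liv (take i tp) = t" and ld: "liv (drop i tp) = y" and ps: "p \<in> states A"
  shows "\<exists>tp' i'. (lba_step MA)\<^sup>*\<^sup>* (Main p, tp, i) (Main p', tp', i') \<and> shapeA tp' \<and> 0 < i' \<and> i' < length tp' \<and>
     liv (take i' tp') = t' \<and> liv (drop i' tp') = y' \<and> p' \<in> states A"
  using grl_move_cases'[OF mv]
proof
  assume "\<exists>x q u v. (p, x, q) \<in> rules A \<and> no_subword_in u (Sigma_p A p) \<and> \<not> ovl u x \<and> y = u @ x @ v \<and>
            t' = t @ u \<and> p' = q \<and> y' = v"
  then obtain x q u v where jump_delete: "(p, x, q) \<in> rules A" "no_subword_in u (Sigma_p A p)" "\<not> ovl u x" "y = u @ x @ v"
            "t' = t @ u" "p' = q" "y' = v" by blast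
  note rl = jump_delete(1)
  have xw: "x \<noteq> []" "q \<in> states A" "length x \<le> K" "x \<in> Bufs" using rule_wf[OF rl] rule_len[OF rl] rule_Bufs[OF rl] by auto
  have tpi: "tp ! i \<in> Tape" using shapeA_Tape[OF sh il] .
  have s1: "lba_step MA (Main p, tp, i) (Skip p x q [], tp, i)"
    by (rule stepS[OF il refl inD[OF Draw.d2[OF rl] inBox]]) (use ps tpi Main_St Skip_St[OF rl Nil_Bufs] in auto)
  have trb: "\<And>b. b \<in> Bufs \<Longrightarrow> (Skip p x q b, bl, Skip p x q b, bl, 1) \<in> lba_delta MA"
    by (rule inD[OF Draw.d3 inBox]) (use Skip_St[OF rl] Tape_simps in auto)
  have tra: "\<And>b a. b \<in> Bufs \<Longrightarrow> a \<in> alph A \<Longrightarrow> okb p b a \<Longrightarrow>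
      (Skip p x q b, Inl a, Skip p x q (lastK (b @ [a])), Inl a, 1) \<in> lba_delta MA"
    by (rule inD[OF Draw.d4 inBox]) (use Skip_St[OF rl] Tape_simps Bufs_snoc in auto)
  have ld2: "liv (drop i tp) = u @ (x @ v)" using ld jump_delete by simp
  obtain j where j: "0 < j" "j < length tp" "liv (take j tp) = liv (take i tp) @ u" "liv (drop j tp) = x @ v"
    "(lba_step MA)\<^sup>*\<^sup>* (Skip p x q (lastK []), tp, i) (Skip p x q (lastK ([] @ u)), tp, j)"
    using scan[where S="Skip p x q" and pre="[]", OF trb tra sh ip il ld2] jump_delete(2) by auto
  have su: "set u \<subseteq> alph A" using set_liv_drop[OF sh, of i] ld2 by auto
  have nov: "\<not> ovl (lastK u) x" using ovl_lastK[OF xw(3)] jump_delete(3) by blast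
  have tpj: "tp ! j \<in> Tape" using shapeA_Tape[OF sh j(2)] .
  have s2: "lba_step MA (Skip p x q (lastK u), tp, j) (Del x q, tp, j)"
    by (rule stepS[OF j(2) refl inD[OF Draw.d5[OF nov] inBox]])
      (use tpj Skip_St[OF rl lastK_Bufs[OF su]] Del_St[OF xw(4) xw(2)] in auto)
  obtain tp' j' where d: "(lba_step MA)\<^sup>*\<^sup>* (Del x q, tp, j) (Main q, tp', j')" "shapeA tp'" "0 < j'" "j' < length tp'"
     "liv (take j' tp') = liv (take j tp)" "liv (drop j' tp') = v"
    using del_run[OF sh j(1,2,4) xw(1,4,2)] by blast
  have run: "(lba_step MA)\<^sup>*\<^sup>* (Main p, tp, i) (Main q, tp', j')"
    using lba_cons[OF s1 lba_trans[OF _ lba_cons[OF s2 d(1)]]] j(5) by simp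
  show ?thesis
    by (rule exI[of _ tp'], rule exI[of _ j']) (use run d j(3) lt jump_delete xw(2) in simp)
next
  assume jump_back: "t \<noteq> [] \<and> no_subword_in y (Sigma_p A p) \<and> t' = [] \<and> p' = p \<and> y' = t @ y"
  have tpi: "tp ! i \<in> Tape" using shapeA_Tape[OF sh il] .
  have s1: "lba_step MA (Main p, tp, i) (Back p [], tp, i)"
    by (rule stepS[OF il refl inD[OF Draw.d8 inBox]]) (use ps tpi Main_St Back_St[OF ps Nil_Bufs] in auto)
  have trb: "\<And>b. b \<in> Bufs \<Longrightarrow> (Back p b, bl, Back p b, bl, 1) \<in> lba_delta MA"
    by (rule inD[OF Draw.d9 inBox]) (use Back_St[OF ps] Tape_simps in auto)
  have tra: "\<And>b a. b \<in> Bufs \<Longrightarrow> a \<in> alph A \<Longrightarrow> okb p b a \<Longrightarrow>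
      (Back p b, Inl a, Back p (lastK (b @ [a])), Inl a, 1) \<in> lba_delta MA"
    by (rule inD[OF Draw.d10 inBox]) (use Back_St[OF ps] Tape_simps Bufs_snoc in auto)
  have ld2: "liv (drop i tp) = y @ []" using ld by simp
  obtain j where j: "0 < j" "j < length tp" "liv (take j tp) = liv (take i tp) @ y" "liv (drop j tp) = []"
    "(lba_step MA)\<^sup>*\<^sup>* (Back p (lastK []), tp, i) (Back p (lastK ([] @ y)), tp, j)"
    using scan[where S="Back p" and pre="[]", OF trb tra sh ip il ld2] jump_back by auto
  have sy: "set y \<subseteq> alph A" using set_liv_drop[OF sh, of i] ld by auto
  have bb: "lastK y \<in> Bufs" using lastK_Bufs[OF sy] .
  have r2: "(lba_step MA)\<^sup>*\<^sup>* (Back p (lastK y), tp, j) (Back p (lastK y), tp, length tp - 1)"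
    by (rule blanks_right[OF trb[OF bb] sh j(1,2,4)])
  have len2: "length tp \<ge> 2" using shapeA_len[OF sh] .
  have rmj: "tp ! (length tp - 1) = rmk" using sh unfolding shapeA_def by (auto simp: nth_append)
  have s3: "lba_step MA (Back p (lastK y), tp, length tp - 1) (Ret p, tp, length tp - 2)"
    by (rule stepL[OF _ _ rmj inD[OF Draw.d11 inBox]]) (use len2 Back_St[OF ps bb] Ret_St[OF ps] Tape_simps in auto)
  have r4: "(lba_step MA)\<^sup>*\<^sup>* (Ret p, tp, length tp - 2) (Ret p, tp, 0)"
  proof (rule left_run)
    show "length tp - 2 < length tp" using len2 by simp
    fix k assume k: "0 < k" "k \<le> length tp - 2"
    then have kl: "k < length tp" by simp
    have "tp ! k = bl \<or> (\<exists>a\<in>alph A. tp ! k = Inl a)" using shapeA_nth[OF sh kl] k by auto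
    then show "(Ret p, tp ! k, Ret p, tp ! k, -1) \<in> lba_delta MA"
    proof
      assume kb: "tp ! k = bl"
      have "(Ret p, bl, Ret p, bl, -1) \<in> lba_delta MA"
        by (rule inD[OF Draw.d12 inBox]) (use Ret_St[OF ps] Tape_simps in auto)
      then show ?thesis using kb by simp
    next
      assume "\<exists>a\<in>alph A. tp ! k = Inl a"
      then obtain a where "a \<in> alph A" "tp ! k = Inl a" by blast
      moreover have "(Ret p, Inl a, Ret p, Inl a, -1) \<in> lba_delta MA"
        by (rule inD[OF Draw.d13 inBox]) (use Ret_St[OF ps] Tape_simps \<open>a \<in> alph A\<close> in auto)
      ultimately show ?thesis by simp
    qed
  qed
  have lm0: "tp ! 0 = lmk" using sh unfolding shapeA_def by auto
  have s4: "lba_step MA (Ret p, tp, 0) (Main p, tp, Suc 0)"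
    by (rule stepR[OF _ lm0 inD[OF Draw.d14 inBox]]) (use len2 Main_St[OF ps] Ret_St[OF ps] Tape_simps in auto)
  have run: "(lba_step MA)\<^sup>*\<^sup>* (Main p, tp, i) (Main p, tp, 1)"
    using lba_cons[OF s1 lba_trans[OF _ lba_trans[OF r2 lba_cons[OF s3 lba_trans[OF r4 lba_cons[OF s4]]]]]] j(5)
    by simp
  have "liv (take 1 tp) = []" "liv (drop 1 tp) = t @ y"
    using liv_take_first[OF sh] liv_drop_first[OF sh] liv_split[of tp i] lt ld by auto
  then show ?thesis
    by (rule_tac exI[of _ tp], rule_tac exI[of _ 1]) (use run sh len2 jump_back ps in simp)
qed

lemma sim_star:
  assumes "(grl_move A)\<^sup>*\<^sup>* ([], init A, w) c" "w \<in> lists (alph A)"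
  shows "\<exists>tp i. (lba_step MA)\<^sup>*\<^sup>* (Start, [lmk] @ map Inl w @ [rmk], 0) (Main (fst (snd c)), tp, i) \<and> shapeA tp \<and>
     0 < i \<and> i < length tp \<and> liv (take i tp) = fst c \<and> liv (drop i tp) = snd (snd c) \<and> fst (snd c) \<in> states A"
  using assms(1)
proof (induction rule: rtranclp_induct)
  case base
  define tp0 where "tp0 = [lmk] @ map Inl w @ [rmk]"
  have sh: "shapeA tp0" unfolding tp0_def using shapeA_init[OF assms(2)] .
  have l0: "Suc 0 < length tp0" "tp0 ! 0 = lmk" unfolding tp0_def by auto
  have ist: "init A \<in> states A" using wf unfolding wf_grlowjfa_def by blast
  have st: "lba_step MA (Start, tp0, 0) (Main (init A), tp0, Suc 0)"
    by (rule stepR[OF l0(1) l0(2) inD[OF Draw.d1 inBox]]) (use Chk_St Main_St[OF ist] Tape_simps in auto)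
  have "liv (take (Suc 0) tp0) = []" "liv (drop (Suc 0) tp0) = w" unfolding tp0_def by auto
  then show ?case
    by (rule_tac exI[of _ tp0], rule_tac exI[of _ "Suc 0"]) (use st sh l0 ist in \<open>simp add: tp0_def\<close>)
next
  case (step y z)
  obtain t p yy where y: "y = (t, p, yy)" by (cases y) auto
  obtain t' p' yy' where z: "z = (t', p', yy')" by (cases z) auto
  from step.IH obtain tp i where h: "(lba_step MA)\<^sup>*\<^sup>* (Start, [lmk] @ map Inl w @ [rmk], 0) (Main p, tp, i)"
    "shapeA tp" "0 < i" "i < length tp" "liv (take i tp) = t" "liv (drop i tp) = yy" "p \<in> states A"
    using y by auto
  have mv: "grl_move A (t, p, yy) (t', p', yy')" using step.hyps(2) y z by simp
  obtain tp' i' where r: "(lba_step MA)\<^sup>*\<^sup>* (Main p, tp, i) (Main p', tp', i')" "shapeA tp'" "0 < i'" "i' < length tp'"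
     "liv (take i' tp') = t'" "liv (drop i' tp') = yy'" "p' \<in> states A"
    using sim_move[OF mv h(2-7)] by blast
  have "(lba_step MA)\<^sup>*\<^sup>* (Start, [lmk] @ map Inl w @ [rmk], 0) (Main p', tp', i')" using lba_trans[OF h(1) r(1)] .
  then show ?case
    by (rule_tac exI[of _ tp'], rule_tac exI[of _ i']) (use r z in simp)
qed

lemma all_blank: "shapeA tp \<Longrightarrow> liv tp = [] \<Longrightarrow> 0 < k \<Longrightarrow> k < length tp - 1 \<Longrightarrow> tp ! k = bl"
proof -
  assume sh: "shapeA tp" and e: "liv tp = []" and k: "0 < k" "k < length tp - 1"
  then have kl: "k < length tp" by simp
  have "tp ! k = bl \<or> (\<exists>a\<in>alph A. tp ! k = Inl a)" using shapeA_nth[OF sh kl] k by auto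
  moreover have "\<not> (\<exists>a. tp ! k = Inl a)"
  proof
    assume "\<exists>a. tp ! k = Inl a"
    then obtain a where "tp ! k = Inl a" by blast
    then have "liv (drop k tp) = a # liv (drop (Suc k) tp)" using liv_drop_Inl[OF kl] by simp
    then show False using e liv_split[of tp k] by simp
  qed
  ultimately show ?thesis by blast
qed

lemma accept_run:
  assumes sh: "shapeA tp" and ip: "0 < i" and il: "i < length tp" and e: "liv (take i tp) = []" "liv (drop i tp) = []"
    and qf: "qf \<in> finals A"
  shows "\<exists>tp' i'. (lba_step MA)\<^sup>*\<^sup>* (Main qf, tp, i) (Acc, tp', i')"
proof -
  have qs: "qf \<in> states A" using qf wf unfolding wf_grlowjfa_def by blast
  have tpi: "tp ! i \<in> Tape" using shapeA_Tape[OF sh il] .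
  have s1: "lba_step MA (Main qf, tp, i) (ChkR, tp, i)"
    by (rule stepS[OF il refl inD[OF Draw.d15[OF qf] inBox]]) (use tpi Main_St[OF qs] Chk_St in auto)
  have tr: "(ChkR, bl, ChkR, bl, 1) \<in> lba_delta MA"
    by (rule inD[OF Draw.d16 inBox]) (use Chk_St Tape_simps in auto)
  have r2: "(lba_step MA)\<^sup>*\<^sup>* (ChkR, tp, i) (ChkR, tp, length tp - 1)"
    by (rule blanks_right[OF tr sh ip il e(2)])
  have len2: "length tp \<ge> 2" using shapeA_len[OF sh] .
  have rmj: "tp ! (length tp - 1) = rmk" using sh unfolding shapeA_def by (auto simp: nth_append)
  have s3: "lba_step MA (ChkR, tp, length tp - 1) (ChkL, tp, length tp - 2)"
    by (rule stepL[OF _ _ rmj inD[OF Draw.d17 inBox]]) (use len2 Chk_St Tape_simps in auto)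
  have lv: "liv tp = []" using e liv_split[of tp i] by simp
  have r4: "(lba_step MA)\<^sup>*\<^sup>* (ChkL, tp, length tp - 2) (ChkL, tp, 0)"
  proof (rule left_run)
    show "length tp - 2 < length tp" using len2 by simp
    fix k assume k: "0 < k" "k \<le> length tp - 2"
    then have "tp ! k = bl" using all_blank[OF sh lv] by simp
    moreover have "(ChkL, bl, ChkL, bl, -1) \<in> lba_delta MA"
      by (rule inD[OF Draw.d18 inBox]) (use Chk_St Tape_simps in auto)
    ultimately show "(ChkL, tp ! k, ChkL, tp ! k, -1) \<in> lba_delta MA" by simp
  qed
  have lm0: "tp ! 0 = lmk" using sh unfolding shapeA_def by auto
  have s4: "lba_step MA (ChkL, tp, 0) (Acc, tp, 0)"
    by (rule stepS[OF _ lm0 inD[OF Draw.d19 inBox]]) (use len2 Chk_St Tape_simps in auto)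
  have "(lba_step MA)\<^sup>*\<^sup>* (Main qf, tp, i) (Acc, tp, 0)"
    using lba_cons[OF s1 lba_trans[OF r2 lba_cons[OF s3 lba_trans[OF r4 lba_cons[OF s4]]]]] by simp
  then show ?thesis by blast
qed

lemma GRL_sub: "L_GRL A \<subseteq> L_LBA MA"
proof
  fix w assume "w \<in> L_GRL A"
  then obtain qf where w: "w \<in> lists (alph A)" "qf \<in> finals A" "(grl_move A)\<^sup>*\<^sup>* ([], init A, w) ([], qf, [])"
    unfolding L_GRL_def by blast
  obtain tp i where h: "(lba_step MA)\<^sup>*\<^sup>* (Start, [lmk] @ map Inl w @ [rmk], 0) (Main qf, tp, i)" "shapeA tp"
    "0 < i" "i < length tp" "liv (take i tp) = []" "liv (drop i tp) = []"
    using sim_star[OF w(3) w(1)] by auto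
  obtain tp' i' where "(lba_step MA)\<^sup>*\<^sup>* (Main qf, tp, i) (Acc, tp', i')"
    using accept_run[OF h(2-6) w(2)] by blast
  then have "(lba_step MA)\<^sup>*\<^sup>* (Start, [lmk] @ map Inl w @ [rmk], 0) (Acc, tp', i')" using lba_trans[OF h(1)] by blast
  then show "w \<in> L_LBA MA" unfolding L_LBA_def using w(1) by (auto simp: MA_def)
qed

lemma L_eq: "L_LBA MA = L_GRL A"
  using LBA_sub GRL_sub by blast

end


definition ren :: "('s \<Rightarrow> nat) \<Rightarrow> ('a, 's) lba \<Rightarrow> ('a, nat) lba" where
  "ren f M = \<lparr> lba_states = f ` lba_states M, lba_input = lba_input M, lba_tape = lba_tape M,
     lba_lm = lba_lm M, lba_rm = lba_rm M,
     lba_delta = (\<lambda>(p, a, q, b, d). (f p, a, f q, b, d)) ` lba_delta M,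
     lba_init = f (lba_init M), lba_finals = f ` lba_finals M \<rparr>"

lemma wf_ren:
  assumes w: "wf_lba M"
  shows "wf_lba (ren f M)"
proof -
  have d: "\<And>x. x \<in> lba_delta M \<Longrightarrow> (case x of (p, a, q, b, d) \<Rightarrow> p \<in> lba_states M \<and> q \<in> lba_states M \<and> a \<in> lba_tape M \<and> b \<in> lba_tape M \<and>
        d \<in> {-1, 0, 1} \<and>
        (a = lba_lm M \<longrightarrow> b = lba_lm M \<and> d \<ge> 0) \<and>
        (a = lba_rm M \<longrightarrow> b = lba_rm M \<and> d \<le> 0) \<and>
        (a \<noteq> lba_lm M \<longrightarrow> b \<noteq> lba_lm M) \<and>
        (a \<noteq> lba_rm M \<longrightarrow> b \<noteq> lba_rm M))"
    using w unfolding wf_lba_def by (metis (no_types, lifting))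
  have ball: "\<forall>(p, a, q, b, d) \<in> (\<lambda>(p, a, q, b, d). (f p, a, f q, b, d)) ` lba_delta M. p \<in> f ` lba_states M \<and> q \<in> f ` lba_states M \<and>
        a \<in> lba_tape M \<and> b \<in> lba_tape M \<and>
        d \<in> {-1, 0, 1} \<and>
        (a = lba_lm M \<longrightarrow> b = lba_lm M \<and> d \<ge> 0) \<and>
        (a = lba_rm M \<longrightarrow> b = lba_rm M \<and> d \<le> 0) \<and>
        (a \<noteq> lba_lm M \<longrightarrow> b \<noteq> lba_lm M) \<and>
        (a \<noteq> lba_rm M \<longrightarrow> b \<noteq> lba_rm M)"
  proof
    fix x assume "x \<in> (\<lambda>(p, a, q, b, d). (f p, a, f q, b, d)) ` lba_delta M"
    then obtain y where y: "y \<in> lba_delta M" "x = (\<lambda>(p, a, q, b, d). (f p, a, f q, b, d)) y" by blast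
    obtain p0 a q0 b d where yy: "y = (p0, a, q0, b, d)" by (cases y) blast
    have x: "x = (f p0, a, f q0, b, d)" "(p0, a, q0, b, d) \<in> lba_delta M" using y yy by simp_all
    from d[OF x(2)] have "p0 \<in> lba_states M \<and> q0 \<in> lba_states M \<and> a \<in> lba_tape M \<and> b \<in> lba_tape M \<and>
        d \<in> {-1, 0, 1} \<and>
        (a = lba_lm M \<longrightarrow> b = lba_lm M \<and> d \<ge> 0) \<and>
        (a = lba_rm M \<longrightarrow> b = lba_rm M \<and> d \<le> 0) \<and>
        (a \<noteq> lba_lm M \<longrightarrow> b \<noteq> lba_lm M) \<and>
        (a \<noteq> lba_rm M \<longrightarrow> b \<noteq> lba_rm M)" by simp
    then show "case x of (p, a, q, b, d) \<Rightarrow> p \<in> f ` lba_states M \<and> q \<in> f ` lba_states M \<and>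
        a \<in> lba_tape M \<and> b \<in> lba_tape M \<and>
        d \<in> {-1, 0, 1} \<and>
        (a = lba_lm M \<longrightarrow> b = lba_lm M \<and> d \<ge> 0) \<and>
        (a = lba_rm M \<longrightarrow> b = lba_rm M \<and> d \<le> 0) \<and>
        (a \<noteq> lba_lm M \<longrightarrow> b \<noteq> lba_lm M) \<and>
        (a \<noteq> lba_rm M \<longrightarrow> b \<noteq> lba_rm M)" unfolding x(1) by (simp add: imageI)
  qed
  have o: "finite (lba_states M)" "finite (lba_input M)" "finite (lba_tape M)" "Inl ` lba_input M \<subseteq> lba_tape M"
     "lba_lm M \<in> lba_tape M - Inl ` lba_input M" "lba_rm M \<in> lba_tape M - Inl ` lba_input M"
     "lba_lm M \<noteq> lba_rm M" "lba_init M \<in> lba_states M" "lba_finals M \<subseteq> lba_states M" "finite (lba_delta M)"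
    using w unfolding wf_lba_def by auto
  show ?thesis unfolding wf_lba_def ren_def lba.simps
    apply (intro conjI)
    using o apply (simp_all only: finite_imageI image_mono imageI)
    apply simp
    apply (rule ball)
    done
qed

lemma step_ren1:
  assumes "lba_step M c c'"
  shows "lba_step (ren f M) (f (fst c), snd c) (f (fst c'), snd c')"
  using assms
proof cases
  case (1 i tp p q b d)
  have "(f p, tp ! i, f q, b, d) \<in> lba_delta (ren f M)" using 1 unfolding ren_def by force
  then show ?thesis using 1 by (auto intro: lba_step.intros)
qed

lemma star_ren1:
  assumes "(lba_step M)\<^sup>*\<^sup>* c c'"
  shows "(lba_step (ren f M))\<^sup>*\<^sup>* (f (fst c), snd c) (f (fst c'), snd c')"
  using assms
proof (induction rule: rtranclp_induct)
  case base
  then show ?case by simp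
next
  case (step y z)
  then show ?case using step_ren1[OF step(2), of f] by (meson rtranclp.rtrancl_into_rtrancl)
qed

lemma step_ren2:
  assumes "lba_step (ren f M) c c'" "inj f" "fst c = f p"
  shows "\<exists>q. fst c' = f q \<and> lba_step M (p, snd c) (q, snd c')"
  using assms(1)
proof cases
  case (1 i tp p' q' b d)
  then obtain p0 q0 where h: "(p0, tp ! i, q0, b, d) \<in> lba_delta M" "p' = f p0" "q' = f q0"
    unfolding ren_def by auto
  have "p0 = p" using h(2) 1 assms(2,3) by (simp add: inj_eq)
  then have "lba_step M (p, tp, i) (q0, tp[i := b], nat (int i + d))"
    using h 1 by (auto intro: lba_step.intros)
  then show ?thesis using 1 h by auto
qed

lemma star_ren2:
  assumes "(lba_step (ren f M))\<^sup>*\<^sup>* c c'" "inj f" "fst c = f p"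
  shows "\<exists>q. fst c' = f q \<and> (lba_step M)\<^sup>*\<^sup>* (p, snd c) (q, snd c')"
  using assms(1)
proof (induction rule: rtranclp_induct)
  case base
  then show ?case using assms(3) by auto
next
  case (step y z)
  then obtain q where q: "fst y = f q" "(lba_step M)\<^sup>*\<^sup>* (p, snd c) (q, snd y)" by blast
  from step_ren2[OF step(2) assms(2) q(1)] obtain q' where "fst z = f q'" "lba_step M (q, snd y) (q', snd z)" by blast
  then show ?case using q(2) by (meson rtranclp.rtrancl_into_rtrancl)
qed

lemma L_ren:
  assumes "inj f"
  shows "L_LBA (ren f M) = L_LBA M"
proof
  show "L_LBA (ren f M) \<subseteq> L_LBA M"
  proof
    fix w assume "w \<in> L_LBA (ren f M)"
    then obtain q tp i where h: "w \<in> lists (lba_input M)" "q \<in> f ` lba_finals M"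
      "(lba_step (ren f M))\<^sup>*\<^sup>* (f (lba_init M), [lba_lm M] @ map Inl w @ [lba_rm M], 0) (q, tp, i)"
      unfolding L_LBA_def ren_def by auto
    from star_ren2[OF h(3) assms, of "lba_init M"] obtain q' where
      "q = f q'" "(lba_step M)\<^sup>*\<^sup>* (lba_init M, [lba_lm M] @ map Inl w @ [lba_rm M], 0) (q', tp, i)" by auto
    moreover have "q' \<in> lba_finals M" using h(2) \<open>q = f q'\<close> assms by (auto simp: inj_eq)
    ultimately show "w \<in> L_LBA M" unfolding L_LBA_def using h(1) by blast
  qed
next
  show "L_LBA M \<subseteq> L_LBA (ren f M)"
  proof
    fix w assume "w \<in> L_LBA M"
    then obtain q tp i where h: "w \<in> lists (lba_input M)" "q \<in> lba_finals M"
      "(lba_step M)\<^sup>*\<^sup>* (lba_init M, [lba_lm M] @ map Inl w @ [lba_rm M], 0) (q, tp, i)"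
      unfolding L_LBA_def by auto
    from star_ren1[OF h(3), of f] have
      "(lba_step (ren f M))\<^sup>*\<^sup>* (f (lba_init M), [lba_lm M] @ map Inl w @ [lba_rm M], 0) (f q, tp, i)" by simp
    then show "w \<in> L_LBA (ren f M)" unfolding L_LBA_def using h(1,2) by (auto simp: ren_def)
  qed
qed

lemma GRLOWJ_sub_CS: "(GRLOWJ :: nat list set set) \<subseteq> CS"
proof
  fix L :: "nat list set" assume "L \<in> GRLOWJ"
  then obtain A :: "(nat, nat) grlowjfa" where wf: "wf_grlowjfa A" and L: "L = L_GRL A"
    unfolding GRLOWJ_def by blast
  interpret G: grlA A by (rule grlA.intro[OF wf])
  let ?M = "ren (to_nat :: st \<Rightarrow> nat) G.MA"
  have "wf_lba ?M" using wf_ren[OF G.wf_MA] .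
  moreover have "L_LBA ?M = L" using L_ren[of "to_nat :: st \<Rightarrow> nat" G.MA] G.L_eq L by simp
  ultimately show "L \<in> CS" unfolding CS_def by blast
qed

theorem proposition5:
  shows "(GRLOWJ :: nat list set set) \<subset> CS"
  using GRLOWJ_sub_CS Pow2L_in Pow2L_notin by blast


end
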